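(* Let $k\in\mathbb{R}$, let $v_k(t,r)=\frac{1}{2\pi}\big(\cosh^2(t/2)-\cosh^2(r/2)\big)_+^{-1/2}F\big(|k|,-|k|,\frac12,1-\frac{\cosh^2(t/2)}{\cosh^2(r/2)}\big)$, and for $w,w'\in\mathbb{D}$ set $$V_k(t,w,w')=\big[T^k(g_{w'})\,v_k(t,d(0,\cdot))\big](w),\qquad\text{where } [T^k(g_{w'})f](w)=\Big(\frac{1-\overline w w'}{1-w\overline{w'}}\Big)^k f\Big(\frac{w-w'}{1-\overline{w'}w}\Big).$$ Then $$V_k(t,w,w')=\frac{1}{2\pi}\Big(\frac{1-\overline w w'}{1-w\overline{w'}}\Big)^k\Big(\cosh^2(t/2)-\cosh^2(d(w,w')/2)\Big)_+^{-1/2}F\Big(|k|,-|k|,\tfrac12,1-\frac{\cosh^2(t/2)}{\cosh^2(d(w,w')/2)}\Big),$$ and, for $t>0$ and $d(w,w')<t$, $$\mathcal{D}^w_k V_k(t,w,w')=\frac{\partial^2}{\partial t^2}V_k(t,w,w'),\qquad \mathcal{D}^{w'}_{-k}V_k(t,w,w')=\frac{\partial^2}{\partial t^2}V_k(t,w,w'),$$ where $\mathcal{D}^w_k$ (resp. $\mathcal{D}^{w'}_{-k}$) denotes the operator $\mathcal{D}_k$ acting in the variable $w$ (resp. $\mathcal{D}_{-k}$ acting in $w'$).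
   Context: $\mathbb{D}=\{w\in\mathbb{C}:|w|<1\}$ with hyperbolic distance $d$ given by $\cosh^2(d(w,w')/2)=\frac{|1-w\overline{w'}|^2}{(1-|w|^2)(1-|w'|^2)}$. For real $k$, $\mathcal{D}_k=\mathcal{L}^{\mathbb{D}}_k+k^2+\frac14$ with $\mathcal{L}^{\mathbb{D}}_k=(1-|w|^2)^2\frac{\partial^2}{\partial w\partial\overline w}+k(1-|w|^2)w\frac{\partial}{\partial w}-k(1-|w|^2)\overline w\frac{\partial}{\partial\overline w}-k^2|w|^2$. Since $q=1-\overline w w'$ has $\operatorname{Re}q>0$, the power $\big(\frac{1-\overline w w'}{1-w\overline{w'}}\big)^k=(q/\overline q)^k$ is defined as $e^{2ik\arg q}$ with $\arg q\in(-\pi/2,\pi/2)$. $(a)_+=\max(a,0)$; $F$ is the Gauss hypergeometric function $\sum_{n\ge0}\frac{(a)_n(b)_n}{(c)_n n!}z^n$, analytically continued to $\mathbb{C}\setminus[1,\infty)$. *)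

theory Defs
  imports "HOL-Analysis.Analysis"
begin

definition hdist :: "complex \<Rightarrow> complex \<Rightarrow> real" where
  "hdist w w' = 2 * arcosh (sqrt ((cmod (1 - w * cnj w'))\<^sup>2 /
                 ((1 - (cmod w)\<^sup>2) * (1 - (cmod w')\<^sup>2))))"

definition hyp_series :: "real \<Rightarrow> real \<Rightarrow> real \<Rightarrow> complex \<Rightarrow> complex" where
  "hyp_series a b c z = (\<Sum>n. complex_of_real (pochhammer a n * pochhammer b n /
                                 (pochhammer c n * fact n)) * z ^ n)"

definition slit_plane :: "complex set" where
  "slit_plane = - {complex_of_real x | x. x \<ge> 1}"

definition hyp2F1 :: "real \<Rightarrow> real \<Rightarrow> real \<Rightarrow> complex \<Rightarrow> complex" where
  "hyp2F1 a b c = (SOME f. f holomorphic_on slit_plane \<and>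
                         (\<forall>z. cmod z < 1 \<longrightarrow> f z = hyp_series a b c z))"

definition pos_pow_neg_half :: "real \<Rightarrow> real" where
  "pos_pow_neg_half x = (if x > 0 then x powr (-1/2) else 0)"

text \<open>((1 - cnj w w')/(1 - w cnj w'))^k = exp(2 i k arg q), q = 1 - cnj w w'.\<close>
definition phase :: "real \<Rightarrow> complex \<Rightarrow> complex \<Rightarrow> complex" where
  "phase k w w' = cis (2 * k * Arg (1 - cnj w * w'))"

definition v_fun :: "real \<Rightarrow> real \<Rightarrow> real \<Rightarrow> complex" where
  "v_fun k t r = complex_of_real (1 / (2 * pi) *
      pos_pow_neg_half ((cosh (t/2))\<^sup>2 - (cosh (r/2))\<^sup>2)) *
      hyp2F1 \<bar>k\<bar> (- \<bar>k\<bar>) (1/2)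
         (complex_of_real (1 - (cosh (t/2))\<^sup>2 / (cosh (r/2))\<^sup>2))"

definition Tk :: "real \<Rightarrow> complex \<Rightarrow> (complex \<Rightarrow> complex) \<Rightarrow> complex \<Rightarrow> complex" where
  "Tk k w' f w = phase k w w' * f ((w - w') / (1 - cnj w' * w))"

definition V_fun :: "real \<Rightarrow> real \<Rightarrow> complex \<Rightarrow> complex \<Rightarrow> complex" where
  "V_fun k t w w' = Tk k w' (\<lambda>z. v_fun k t (hdist 0 z)) w"

definition dx :: "(complex \<Rightarrow> complex) \<Rightarrow> complex \<Rightarrow> complex" where
  "dx f z = vector_derivative (\<lambda>s::real. f (z + complex_of_real s)) (at 0)"

definition dy :: "(complex \<Rightarrow> complex) \<Rightarrow> complex \<Rightarrow> complex" where
  "dy f z = vector_derivative (\<lambda>s::real. f (z + \<i> * complex_of_real s)) (at 0)"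

definition dw :: "(complex \<Rightarrow> complex) \<Rightarrow> complex \<Rightarrow> complex" where
  "dw f z = (dx f z - \<i> * dy f z) / 2"

definition dwbar :: "(complex \<Rightarrow> complex) \<Rightarrow> complex \<Rightarrow> complex" where
  "dwbar f z = (dx f z + \<i> * dy f z) / 2"

definition LD :: "real \<Rightarrow> (complex \<Rightarrow> complex) \<Rightarrow> complex \<Rightarrow> complex" where
  "LD k f w = complex_of_real ((1 - (cmod w)\<^sup>2)\<^sup>2) * dw (dwbar f) w
     + complex_of_real (k * (1 - (cmod w)\<^sup>2)) * w * dw f w
     - complex_of_real (k * (1 - (cmod w)\<^sup>2)) * cnj w * dwbar f w
     - complex_of_real (k\<^sup>2 * (cmod w)\<^sup>2) * f w"

definition Dop :: "real \<Rightarrow> (complex \<Rightarrow> complex) \<Rightarrow> complex \<Rightarrow> complex" where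
  "Dop k f w = LD k f w + complex_of_real (k\<^sup>2 + 1/4) * f w"

definition dtt :: "(real \<Rightarrow> complex) \<Rightarrow> real \<Rightarrow> complex" where
  "dtt g t = vector_derivative (\<lambda>s. vector_derivative g (at s)) (at t)"

end

theory Submission
  imports Defs "HOL-Complex_Analysis.Complex_Analysis"
begin


lemma Arcsin_body_notin: "\<i> * s + csqrt(1 - s\<^sup>2) \<notin> \<real>\<^sub>\<le>\<^sub>0"
proof
  let ?E = "\<i> * s + csqrt(1 - s\<^sup>2)"
  assume "?E \<in> \<real>\<^sub>\<le>\<^sub>0"
  then obtain x where x: "?E = of_real x" "x \<le> 0" by (auto simp: nonpos_Reals_def)
  have ne: "?E \<noteq> 0" by (rule Arcsin_body_lemma)
  have prod: "?E * (- \<i> * s + csqrt(1 - s\<^sup>2)) = 1"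
    by (simp add: algebra_simps power2_eq_square[symmetric])
  have x0: "x < 0" using x ne by auto
  have "- \<i> * s + csqrt(1 - s\<^sup>2) = of_real (1/x)" using prod x x0
    by (metis divide_eq_eq mult.commute nonzero_eq_divide_eq of_real_1 of_real_divide of_real_eq_0_iff ne)
  moreover have "2 * csqrt(1 - s\<^sup>2) = ?E + (- \<i> * s + csqrt(1 - s\<^sup>2))" by simp
  ultimately have "2 * csqrt(1 - s\<^sup>2) = of_real (x + 1/x)" using x(1) by simp
  then have "2 * Re (csqrt(1 - s\<^sup>2)) = x + 1/x" by (metis Re_complex_of_real mult_2 plus_complex.sel(1))
  moreover have "x + 1/x < 0" using x0 by (simp add: add_neg_neg)
  ultimately show False using Re_csqrt[of "1 - s\<^sup>2"] by linarith
qed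

lemma Arcsin_minus: "Arcsin (- s) = - Arcsin s"
proof -
  have prod: "(\<i> * s + csqrt(1 - s\<^sup>2)) * (- \<i> * s + csqrt(1 - s\<^sup>2)) = 1"
    by (simp add: algebra_simps power2_eq_square[symmetric])
  hence "\<i> * (- s) + csqrt(1 - (- s)\<^sup>2) = inverse (\<i> * s + csqrt(1 - s\<^sup>2))"
    by (simp add: inverse_unique[OF prod])
  thus ?thesis unfolding Arcsin_def using Ln_inverse[OF Arcsin_body_notin[of s]] by simp
qed

definition hA :: "real \<Rightarrow> complex \<Rightarrow> complex" where
  "hA a s = cos (2 * complex_of_real a * Arcsin s)"

definition fF :: "real \<Rightarrow> complex \<Rightarrow> complex" where
  "fF a z = hA a (csqrt z)"

lemma hA_even: "hA a (- s) = hA a s"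
  by (simp add: hA_def Arcsin_minus)

lemma fF_alt: "fF a z = hA a (\<i> * csqrt (- z))"
proof -
  have "(csqrt z)\<^sup>2 = (\<i> * csqrt (- z))\<^sup>2" by (simp add: power_mult_distrib)
  then have "csqrt z = \<i> * csqrt (- z) \<or> csqrt z = - (\<i> * csqrt (- z))"
    using power2_eq_iff by blast
  then show ?thesis unfolding fF_def using hA_even by metis
qed

lemma slit_plane_eq: "slit_plane = - {z. Im z = 0 \<and> 1 \<le> Re z}"
  unfolding slit_plane_def
  by (auto simp: complex_eq_iff)

lemma open_slit: "open slit_plane"
  unfolding slit_plane_eq
  by (intro open_Compl closed_Collect_conj closed_Collect_eq closed_Collect_le continuous_intros)

lemma slit_starlike: "starlike slit_plane"
  unfolding starlike_def
proof (intro bexI[of _ 0] ballI)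
  show "0 \<in> slit_plane" by (simp add: slit_plane_eq)
  fix z assume z: "z \<in> slit_plane"
  show "closed_segment 0 z \<subseteq> slit_plane"
  proof
    fix y assume "y \<in> closed_segment 0 z"
    then obtain u where u: "0 \<le> u" "u \<le> 1" "y = u *\<^sub>R z" by (auto simp: closed_segment_def)
    show "y \<in> slit_plane"
    proof (rule ccontr)
      assume "y \<notin> slit_plane"
      then have "Im y = 0" "1 \<le> Re y" by (auto simp: slit_plane_eq)
      then have "Im z = 0" "u * Re z \<ge> 1" using u by auto
      then have "u > 0" using u by (cases "u = 0") auto
      have rz: "Re z > 0"
      proof (rule ccontr)
        assume "\<not> Re z > 0"
        then have "u * Re z \<le> 0" using u by (simp add: mult_nonneg_nonpos)
        then show False using \<open>u * Re z \<ge> 1\<close> by simp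
      qed
      then have "Re z \<ge> 1" using u mult_left_le_one_le[of "Re z" u] \<open>u * Re z \<ge> 1\<close> by linarith
      then show False using z \<open>Im z = 0\<close> by (auto simp: slit_plane_eq)
    qed
  qed
qed

lemma connected_slit: "connected slit_plane"
  by (rule starlike_imp_connected[OF slit_starlike])

lemma ball_sub_slit: "ball 0 1 \<subseteq> slit_plane"
  by (auto simp: slit_plane_eq dist_norm) (smt (verit) abs_Re_le_cmod)

lemma csqrt_slit_cond:
  assumes "z \<in> slit_plane" "Im (csqrt z) = 0"
  shows "\<bar>Re (csqrt z)\<bar> < 1"
proof -
  have "z \<in> \<real>\<^sub>\<ge>\<^sub>0" using assms(2) Im_csqrt_eq_0_iff by blast
  then obtain x where x: "z = of_real x" "x \<ge> 0" by (auto simp: nonneg_Reals_def)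
  then have "x < 1" using assms(1) by (auto simp: slit_plane_eq)
  then show ?thesis using x by (simp add: csqrt_of_real)
qed

lemma isCont_csqrt0: "isCont csqrt 0"
proof -
  have "((\<lambda>z. sqrt (cmod z)) \<longlongrightarrow> sqrt (cmod 0)) (at 0)"
    by (intro tendsto_intros)
  then have "((\<lambda>z. cmod (csqrt z)) \<longlongrightarrow> 0) (at 0)" by simp
  then have "(csqrt \<longlongrightarrow> 0) (at 0)" by (rule tendsto_norm_zero_cancel)
  then show ?thesis unfolding isCont_def by simp
qed

lemma fF_deriv:
  assumes "z \<in> slit_plane" "z \<notin> \<real>\<^sub>\<le>\<^sub>0"
  shows "(fF a has_field_derivative
     (- sin (2 * of_real a * Arcsin (csqrt z)) * (2 * of_real a * (inverse (cos (Arcsin (csqrt z)))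
       * inverse (2 * csqrt z))))) (at z)"
proof -
  have c: "Im (csqrt z) = 0 \<Longrightarrow> \<bar>Re (csqrt z)\<bar> < 1" using csqrt_slit_cond assms by blast
  have d1: "(csqrt has_field_derivative inverse(2*csqrt z)) (at z)"
    by (rule has_field_derivative_csqrt[OF assms(2)])
  have d2: "(Arcsin has_field_derivative inverse(cos(Arcsin(csqrt z)))) (at (csqrt z))"
    by (rule has_field_derivative_Arcsin[OF c])
  have d3: "((\<lambda>z. Arcsin(csqrt z)) has_field_derivative inverse(cos(Arcsin(csqrt z))) * inverse(2*csqrt z)) (at z)"
    using DERIV_chain2[OF d2 d1] .
  have "((\<lambda>z. cos (2 * of_real a * Arcsin (csqrt z))) has_field_derivative
     (- sin (2 * of_real a * Arcsin (csqrt z)) * (2 * of_real a * (inverse (cos (Arcsin (csqrt z)))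
       * inverse (2 * csqrt z))))) (at z)"
    by (rule DERIV_chain2[OF DERIV_cos DERIV_cmult[OF d3]])
  then show ?thesis by (simp add: fF_def[abs_def] hA_def)
qed

lemma fF_holo_open: "fF a holomorphic_on (slit_plane - \<real>\<^sub>\<le>\<^sub>0)"
  unfolding holomorphic_on_def
  using fF_deriv field_differentiable_def field_differentiable_at_within by blast

lemma fF_cont: "continuous_on slit_plane (fF a)"
proof (intro continuous_at_imp_continuous_on ballI)
  fix z assume z: "z \<in> slit_plane"
  show "isCont (fF a) z"
  proof (cases "z \<in> \<real>\<^sub>\<le>\<^sub>0")
    case False
    then show ?thesis using fF_deriv[OF z False] DERIV_isCont by blast
  next
    case True
    then obtain x where x: "z = of_real x" "x \<le> 0" by (auto simp: nonpos_Reals_def)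
    have cs: "isCont csqrt (- z)"
    proof (cases "x = 0")
      case True then show ?thesis using x isCont_csqrt0 by simp
    next
      case False
      then have "- z \<notin> \<real>\<^sub>\<le>\<^sub>0" using x by (auto simp: complex_nonpos_Reals_iff)
      then show ?thesis by (rule continuous_at_csqrt)
    qed
    have "Re (\<i> * csqrt (- z)) = 0" using x by (simp add: csqrt_of_real)
    then have ca: "isCont Arcsin (\<i> * csqrt (- z))" by (intro isCont_Arcsin) auto
    have c0: "isCont (\<lambda>x. csqrt (- x)) z"
      by (rule isCont_o2[where f="\<lambda>x. - x" and g=csqrt]) (auto intro: continuous_intros cs)
    have c1: "isCont (\<lambda>x. Arcsin (\<i> * csqrt (- x))) z"
      by (rule isCont_o2[where f="\<lambda>x. \<i> * csqrt (- x)" and g=Arcsin, OF _ ca]) (intro continuous_intros c0)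
    have "isCont (\<lambda>z. hA a (\<i> * csqrt (- z))) z"
      unfolding hA_def by (intro continuous_intros c1)
    then show ?thesis using fF_alt[of a] by (simp add: fF_alt[abs_def])
  qed
qed

lemma fF_holo: "fF a holomorphic_on slit_plane"
proof (rule holomorphic_on_paste_across_line[OF open_slit, of \<i> _ 0])
  have "slit_plane \<inter> {z. \<i> \<bullet> z < 0} \<subseteq> slit_plane - \<real>\<^sub>\<le>\<^sub>0"
    by (auto simp: complex_nonpos_Reals_iff inner_complex_def)
  then show "fF a holomorphic_on slit_plane \<inter> {z. \<i> \<bullet> z < 0}"
    using fF_holo_open holomorphic_on_subset by blast
  have "slit_plane \<inter> {z. 0 < \<i> \<bullet> z} \<subseteq> slit_plane - \<real>\<^sub>\<le>\<^sub>0"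
    by (auto simp: complex_nonpos_Reals_iff inner_complex_def)
  then show "fF a holomorphic_on slit_plane \<inter> {z. 0 < \<i> \<bullet> z}"
    using fF_holo_open holomorphic_on_subset by blast
qed (auto intro: fF_cont)

definition f1F :: "real \<Rightarrow> complex \<Rightarrow> complex" where
  "f1F a z = - of_real a * sin (2 * of_real a * Arcsin (csqrt z)) / (csqrt z * cos (Arcsin (csqrt z)))"

lemma slit_open2: "open (slit_plane - \<real>\<^sub>\<le>\<^sub>0)"
  using open_slit by (simp add: open_Diff)

lemma slit_facts:
  assumes "z \<in> slit_plane" "z \<notin> \<real>\<^sub>\<le>\<^sub>0"
  shows "csqrt z \<noteq> 0" "cos (Arcsin (csqrt z)) \<noteq> 0" "Im (csqrt z) = 0 \<Longrightarrow> \<bar>Re (csqrt z)\<bar> < 1"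
        "csqrt z \<notin> \<real>\<^sub>\<le>\<^sub>0"
proof -
  have "z \<noteq> 0" using assms(2) by (auto simp: complex_nonpos_Reals_iff)
  then show "csqrt z \<noteq> 0" by auto
  have "z \<noteq> 1" using assms(1) by (auto simp: slit_plane_eq)
  then show "cos (Arcsin (csqrt z)) \<noteq> 0" by (intro cos_Arcsin_nonzero) simp
  show "Im (csqrt z) = 0 \<Longrightarrow> \<bar>Re (csqrt z)\<bar> < 1" using csqrt_slit_cond assms by blast
  show "csqrt z \<notin> \<real>\<^sub>\<le>\<^sub>0" using assms \<open>z \<noteq> 0\<close> by simp
qed

lemma fF_deriv1:
  assumes "z \<in> slit_plane" "z \<notin> \<real>\<^sub>\<le>\<^sub>0"
  shows "(fF a has_field_derivative f1F a z) (at z)"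
proof -
  note sf = slit_facts[OF assms]
  have "f1F a z = (- sin (2 * of_real a * Arcsin (csqrt z)) * (2 * of_real a * (inverse (cos (Arcsin (csqrt z)))
       * inverse (2 * csqrt z))))"
    using sf unfolding f1F_def by (simp add: field_simps)
  then show ?thesis using fF_deriv[OF assms] by simp
qed

lemma arc_deriv:
  assumes "z \<in> slit_plane" "z \<notin> \<real>\<^sub>\<le>\<^sub>0"
  shows "((\<lambda>z. Arcsin(csqrt z)) has_field_derivative inverse(cos(Arcsin(csqrt z))) * inverse(2*csqrt z)) (at z)"
proof -
  note sf = slit_facts[OF assms]
  have d1: "(csqrt has_field_derivative inverse(2*csqrt z)) (at z)"
    by (rule has_field_derivative_csqrt[OF assms(2)])
  have d2: "(Arcsin has_field_derivative inverse(cos(Arcsin(csqrt z)))) (at (csqrt z))"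
    by (rule has_field_derivative_Arcsin[OF sf(3)])
  show ?thesis using DERIV_chain2[OF d2 d1] .
qed

lemma f1F_deriv:
  assumes "z \<in> slit_plane" "z \<notin> \<real>\<^sub>\<le>\<^sub>0"
  shows "(f1F a has_field_derivative
     (let s = csqrt z; A = Arcsin s; c = cos A in
      - of_real a * ((of_real a * cos (2 * of_real a * A) / (s * c)) * (s * c)
        - sin (2 * of_real a * A) * (c / (2 * s) - s / (2 * c))) / (s * c)^2)) (at z)"
proof -
  note sf = slit_facts[OF assms]
  note d3 = arc_deriv[OF assms]
  have d1: "(csqrt has_field_derivative inverse(2*csqrt z)) (at z)"
    by (rule has_field_derivative_csqrt[OF assms(2)])
  have dS: "((\<lambda>z. sin(2 * of_real a * Arcsin(csqrt z))) has_field_derivative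
      cos(2 * of_real a * Arcsin(csqrt z)) * (2 * of_real a * (inverse(cos(Arcsin(csqrt z))) * inverse(2*csqrt z)))) (at z)"
    by (rule DERIV_chain2[OF DERIV_sin DERIV_cmult[OF d3]])
  have dD: "((\<lambda>z. csqrt z * cos(Arcsin(csqrt z))) has_field_derivative
      inverse(2*csqrt z) * cos(Arcsin(csqrt z)) + (- sin (Arcsin(csqrt z)) * (inverse(cos(Arcsin(csqrt z))) * inverse(2*csqrt z))) * csqrt z) (at z)"
    by (rule DERIV_mult[OF d1 DERIV_chain2[OF DERIV_cos d3]])
  have nz: "csqrt z * cos(Arcsin(csqrt z)) \<noteq> 0" using sf by simp
  note dq = DERIV_cmult[OF DERIV_divide[OF dS dD nz], of "- of_real a"]
  have e: "f1F a = (\<lambda>z. - of_real a * (sin(2 * of_real a * Arcsin(csqrt z)) / (csqrt z * cos(Arcsin(csqrt z)))))"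
    by (simp add: f1F_def fun_eq_iff)
  show ?thesis unfolding e Let_def
    apply (rule DERIV_cong[OF dq])
    using sf by (simp add: field_simps power2_eq_square)
qed

lemma ode_alg:
  fixes s c a S2 C2 :: complex
  assumes "s \<noteq> 0" "c \<noteq> 0" "c^2 = 1 - s^2"
  shows "s^2 * (1 - s^2) * (- a * ((a * C2 / (s * c)) * (s * c)
        - S2 * (c / (2 * s) - s / (2 * c))) / (s * c)^2)
      + (1/2 - s^2) * (- a * S2 / (s * c)) + a^2 * C2 = 0"
proof -
  have e: "1 - s^2 = c^2" using assms by simp
  show ?thesis unfolding e using assms by (simp add: field_simps) algebra
qed

lemma fF_ode_pt:
  assumes "z \<in> slit_plane" "z \<notin> \<real>\<^sub>\<le>\<^sub>0"
  shows "z * (1 - z) * deriv (deriv (fF a)) z + (1/2 - z) * deriv (fF a) z + (of_real a)^2 * fF a z = 0"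
proof -
  note sf = slit_facts[OF assms]
  have ev: "eventually (\<lambda>y. deriv (fF a) y = f1F a y) (nhds z)"
    using eventually_nhds_in_open[OF slit_open2, of z] assms
    by (auto elim!: eventually_mono intro!: DERIV_imp_deriv fF_deriv1)
  have "deriv (deriv (fF a)) z = deriv (f1F a) z" by (rule deriv_cong_ev[OF ev refl])
  also have "\<dots> = (let s = csqrt z; A = Arcsin s; c = cos A in
      - of_real a * ((of_real a * cos (2 * of_real a * A) / (s * c)) * (s * c)
        - sin (2 * of_real a * A) * (c / (2 * s) - s / (2 * c))) / (s * c)^2)"
    by (rule DERIV_imp_deriv[OF f1F_deriv[OF assms]])
  finally have d2: "deriv (deriv (fF a)) z = \<dots>" .
  have d1: "deriv (fF a) z = f1F a z" by (rule DERIV_imp_deriv[OF fF_deriv1[OF assms]])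
  have c2: "(cos (Arcsin (csqrt z)))^2 = 1 - (csqrt z)^2"
    using cos_squared_eq[of "Arcsin (csqrt z)"] by simp
  have zs: "z = (csqrt z)^2" by simp
  have "(csqrt z)^2 * (1 - (csqrt z)^2) * deriv (deriv (fF a)) z + (1/2 - (csqrt z)^2) * deriv (fF a) z
        + (of_real a)^2 * fF a z = 0"
    unfolding d1 d2 Let_def f1F_def fF_def hA_def
    by (rule ode_alg[OF sf(1) sf(2) c2])
  then show ?thesis by simp
qed

lemma fF_holo_ball: "fF a holomorphic_on ball 0 1"
  using fF_holo holomorphic_on_subset ball_sub_slit by blast

lemma fF_ode_ball:
  assumes "z \<in> ball 0 1"
  shows "z * (1 - z) * deriv (deriv (fF a)) z + (1/2 - z) * deriv (fF a) z + (of_real a)^2 * fF a z = 0"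
proof -
  let ?E = "\<lambda>z. z * (1 - z) * deriv (deriv (fF a)) z + (1/2 - z) * deriv (fF a) z + (of_real a)^2 * fF a z"
  let ?U = "ball 0 1 \<inter> {z. Im z > 0}"
  have hol: "?E holomorphic_on ball 0 1"
    using fF_holo_ball by (intro holomorphic_intros) auto
  have "\<i>/2 \<in> ?U" by auto
  then have ne: "?U \<noteq> {}" by blast
  have op: "open ?U" by (intro open_Int open_ball open_halfspace_Im_gt)
  have "?E z = (\<lambda>_. 0) z"
  proof (rule analytic_continuation_open[OF op open_ball ne connected_ball _ hol holomorphic_on_const])
    show "?U \<subseteq> ball 0 1" by blast
    show "z \<in> ball 0 1" by (rule assms)
    fix y assume y: "y \<in> ?U"
    then have "y \<in> slit_plane" "y \<notin> \<real>\<^sub>\<le>\<^sub>0" using ball_sub_slit by (auto simp: complex_nonpos_Reals_iff)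
    then show "?E y = 0" by (rule fF_ode_pt)
  qed
  then show ?thesis by simp
qed

abbreviation hn :: "real \<Rightarrow> nat \<Rightarrow> complex \<Rightarrow> complex" where
  "hn a n \<equiv> (deriv ^^ n) (fF a)"

lemma hn_deriv: "z \<in> ball 0 1 \<Longrightarrow> (hn a n has_field_derivative hn a (Suc n) z) (at z)"
  by (rule has_field_derivative_higher_deriv[OF fF_holo_ball open_ball])

lemma hn_ode:
  "\<forall>z \<in> ball 0 1. z * (1 - z) * hn a (Suc (Suc n)) z + (1/2 + of_nat n - (1 + 2 * of_nat n) * z) * hn a (Suc n) z
      + ((of_real a)^2 - (of_nat n)^2) * hn a n z = 0"
proof (induction n)
  case 0
  then show ?case using fF_ode_ball by simp
next
  case (Suc n)
  show ?case
  proof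
    fix z :: complex assume z: "z \<in> ball 0 1"
    let ?L = "\<lambda>z. z * (1 - z) * hn a (Suc (Suc n)) z + (1/2 + of_nat n - (1 + 2 * of_nat n) * z) * hn a (Suc n) z
      + ((of_real a)^2 - (of_nat n)^2) * hn a n z"
    have d: "(?L has_field_derivative
        ((1 - 2 * z) * hn a (Suc (Suc n)) z + z * (1 - z) * hn a (Suc (Suc (Suc n))) z
         - (1 + 2 * of_nat n) * hn a (Suc n) z + (1/2 + of_nat n - (1 + 2 * of_nat n) * z) * hn a (Suc (Suc n)) z
         + ((of_real a)^2 - (of_nat n)^2) * hn a (Suc n) z)) (at z)"
      using hn_deriv[OF z, where a=a and n=n] hn_deriv[OF z, where a=a and n="Suc n"] hn_deriv[OF z, where a=a and n="Suc (Suc n)"]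
      by (auto intro!: derivative_eq_intros simp: algebra_simps)
    have d0: "(?L has_field_derivative 0) (at z)"
      by (rule has_field_derivative_transform_within_open[OF DERIV_const open_ball z])
         (use Suc.IH in auto)
    have "((1 - 2 * z) * hn a (Suc (Suc n)) z + z * (1 - z) * hn a (Suc (Suc (Suc n))) z
         - (1 + 2 * of_nat n) * hn a (Suc n) z + (1/2 + of_nat n - (1 + 2 * of_nat n) * z) * hn a (Suc (Suc n)) z
         + ((of_real a)^2 - (of_nat n)^2) * hn a (Suc n) z) = 0"
      using DERIV_unique[OF d d0] .
    then show "z * (1 - z) * hn a (Suc (Suc (Suc n))) z + (1/2 + of_nat (Suc n) - (1 + 2 * of_nat (Suc n)) * z) * hn a (Suc (Suc n)) z
      + ((of_real a)^2 - (of_nat (Suc n))^2) * hn a (Suc n) z = 0"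
      by (simp add: algebra_simps power2_eq_square)
  qed
qed

lemma hn_at0: "hn a n 0 = of_real (pochhammer a n * pochhammer (-a) n / pochhammer (1/2) n)"
proof (induction n)
  case 0
  then show ?case by (simp add: fF_def hA_def)
next
  case (Suc n)
  have "(1/2 + of_nat n) * hn a (Suc n) 0 + ((of_real a)^2 - (of_nat n)^2) * hn a n 0 = 0"
    using bspec[OF hn_ode[where a=a and n=n], of 0] by simp
  then have e1: "(1/2 + of_nat n) * hn a (Suc n) 0 = ((of_nat n)^2 - (of_real a)^2) * hn a n 0"
    by algebra
  have "Re (1/2 + of_nat n :: complex) > 0" by simp
  then have nz: "(1/2 + of_nat n :: complex) \<noteq> 0" by (metis less_irrefl zero_complex.sel(1))
  from e1 have "hn a (Suc n) 0 = ((of_nat n)^2 - (of_real a)^2) / (1/2 + of_nat n) * hn a n 0"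
    using nz by (simp add: field_simps)
  also have "\<dots> = of_real (((real n)^2 - a^2) / (1/2 + real n) * (pochhammer a n * pochhammer (-a) n / pochhammer (1/2) n))"
    unfolding Suc.IH by simp
  also have "((real n)^2 - a^2) / (1/2 + real n) * (pochhammer a n * pochhammer (-a) n / pochhammer (1/2) n)
      = pochhammer a (Suc n) * pochhammer (-a) (Suc n) / pochhammer (1/2) (Suc n)"
    by (simp add: pochhammer_Suc field_simps power2_eq_square)
  finally show ?case .
qed

lemma series_eq:
  assumes "cmod w < 1"
  shows "hyp_series a (-a) (1/2) w = fF a w"
proof -
  have w: "w \<in> ball 0 1" using assms by simp
  have "(\<lambda>n. hn a n 0 / fact n * (w - 0)^n) sums fF a w"
    by (rule holomorphic_power_series[OF fF_holo_ball w])
  moreover have "(\<lambda>n. hn a n 0 / fact n * (w - 0)^n) =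
     (\<lambda>n. complex_of_real (pochhammer a n * pochhammer (-a) n / (pochhammer (1/2) n * fact n)) * w ^ n)"
    by (simp add: hn_at0 fun_eq_iff)
  ultimately show ?thesis unfolding hyp_series_def by (simp add: sums_iff)
qed

lemma hyp2F1_eq:
  assumes "z \<in> slit_plane"
  shows "hyp2F1 a (-a) (1/2) z = fF a z"
proof -
  let ?P = "\<lambda>f. f holomorphic_on slit_plane \<and> (\<forall>z. cmod z < 1 \<longrightarrow> f z = hyp_series a (-a) (1/2) z)"
  have P0: "?P (fF a)" using fF_holo series_eq by auto
  have P: "?P (hyp2F1 a (-a) (1/2))" unfolding hyp2F1_def by (rule someI[where P="?P", OF P0])
  have ne: "ball (0::complex) 1 \<noteq> {}" by simp
  have h1: "hyp2F1 a (-a) (1/2) holomorphic_on slit_plane" using P by blast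
  have eq: "\<And>y. y \<in> ball 0 1 \<Longrightarrow> hyp2F1 a (-a) (1/2) y = fF a y" using P series_eq by auto
  show ?thesis by (rule analytic_continuation_open[OF open_ball open_slit ne connected_slit ball_sub_slit h1 fF_holo eq assms])
qed

lemma Arcsin_ii: "Arcsin (\<i> * of_real y) = \<i> * of_real (arsinh y)"
proof -
  have "sqrt (y^2) < sqrt (1 + y^2)" by (rule real_sqrt_less_mono) simp
  then have "\<bar>y\<bar> < sqrt (1 + y^2)" by simp
  then have sq: "sqrt (1 + y^2) > y" "sqrt (1 + y^2) > -y" by (auto simp: abs_less_iff)
  have pos: "sqrt (1 + y^2) - y > 0" using sq by simp
  have e1: "\<i> * (\<i> * of_real y) + csqrt (1 - (\<i> * of_real y)\<^sup>2) = of_real (sqrt (1 + y^2) - y)"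
  proof -
    have "1 - (\<i> * of_real y)\<^sup>2 = of_real (1 + y^2)" by (simp add: power_mult_distrib)
    then have "csqrt (1 - (\<i> * of_real y)\<^sup>2) = csqrt (of_real (1 + y^2))" by (simp only:)
    also have "\<dots> = of_real (sqrt (1 + y^2))" by (rule csqrt_of_real) simp
    finally have "csqrt (1 - (\<i> * of_real y)\<^sup>2) = of_real (sqrt (1 + y^2))" .
    then show ?thesis by simp
  qed
  have c: "sqrt (y^2 + 1) = sqrt (1 + y^2)" by (simp add: add.commute)
  have s2: "(sqrt (1 + y^2))^2 = 1 + y^2" by simp
  have prod: "(sqrt (1 + y^2) - y) * (y + sqrt (y^2 + 1)) = 1"
    unfolding c using s2 by algebra
  have "ln (sqrt (1 + y^2) - y) = - arsinh y"
  proof -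
    have p2: "y + sqrt (y^2 + 1) > 0" using sq by (simp add: add.commute)
    have "sqrt (1 + y^2) - y = inverse (y + sqrt (y^2 + 1))"
      using inverse_unique[OF prod] by (metis inverse_inverse_eq)
    then show ?thesis unfolding arsinh_real_def by (simp add: ln_inverse)
  qed
  then show ?thesis
    unfolding Arcsin_def e1 using Ln_of_real[OF pos] by simp
qed

lemma hyp2F1_neg:
  assumes "x \<le> 0"
  shows "hyp2F1 a (-a) (1/2) (of_real x) = of_real (cosh (2 * a * arsinh (sqrt (- x))))"
proof -
  have sl: "complex_of_real x \<in> slit_plane" using assms by (auto simp: slit_plane_eq)
  have cs: "csqrt (- complex_of_real x) = of_real (sqrt (-x))"
  proof -
    have "csqrt (- complex_of_real x) = csqrt (of_real (- x))" by simp
    also have "\<dots> = of_real (sqrt (-x))" by (rule csqrt_of_real) (use assms in simp)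
    finally show ?thesis .
  qed
  have "hyp2F1 a (-a) (1/2) (of_real x) = hA a (\<i> * of_real (sqrt (-x)))"
    unfolding hyp2F1_eq[OF sl] fF_alt cs ..
  also have "\<dots> = cos (\<i> * of_real (2 * a * arsinh (sqrt (- x))))"
  proof -
    have "2 * complex_of_real a * (\<i> * complex_of_real (arsinh (sqrt (- x))))
          = \<i> * of_real (2 * a * arsinh (sqrt (- x)))" by simp
    then show ?thesis unfolding hA_def Arcsin_ii by (simp only:)
  qed
  also have "\<dots> = cosh (of_real (2 * a * arsinh (sqrt (- x))))"
    by (rule cosh_conv_cos[symmetric])
  also have "\<dots> = of_real (cosh (2 * a * arsinh (sqrt (- x))))"
    by (simp add: cosh_def of_real_exp scaleR_conv_of_real)
  finally show ?thesis .
qed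



definition Wd :: "(complex \<Rightarrow> complex) \<Rightarrow> complex \<Rightarrow> complex \<Rightarrow> complex \<Rightarrow> bool" where
  "Wd f z a b \<longleftrightarrow> (f has_derivative (\<lambda>h. a * h + b * cnj h)) (at z)"

lemma W_dx: assumes "Wd f z a b" shows "dx f z = a + b"
proof -
  have g: "((\<lambda>s::real. z + of_real s) has_derivative (\<lambda>h. of_real h)) (at 0)"
    by (auto intro!: derivative_eq_intros)
  have f: "(f has_derivative (\<lambda>h. a * h + b * cnj h)) (at ((\<lambda>s::real. z + of_real s) 0))"
    using assms unfolding Wd_def by simp
  have "((\<lambda>s::real. f (z + of_real s)) has_derivative (\<lambda>h. a * of_real h + b * cnj (of_real h))) (at 0)"
    using has_derivative_compose[OF g f] by simp
  then have "((\<lambda>s::real. f (z + of_real s)) has_vector_derivative (a + b)) (at 0)"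
    unfolding has_vector_derivative_def by (simp add: scaleR_conv_of_real algebra_simps)
  then show ?thesis unfolding dx_def by (rule vector_derivative_at)
qed

lemma W_dy: assumes "Wd f z a b" shows "dy f z = \<i> * a - \<i> * b"
proof -
  have g: "((\<lambda>s::real. z + \<i> * of_real s) has_derivative (\<lambda>h. \<i> * of_real h)) (at 0)"
    by (auto intro!: derivative_eq_intros)
  have f: "(f has_derivative (\<lambda>h. a * h + b * cnj h)) (at ((\<lambda>s::real. z + \<i> * of_real s) 0))"
    using assms unfolding Wd_def by simp
  have "((\<lambda>s::real. f (z + \<i> * of_real s)) has_derivative (\<lambda>h. a * (\<i> * of_real h) + b * cnj (\<i> * of_real h))) (at 0)"
    using has_derivative_compose[OF g f] by simp
  then have "((\<lambda>s::real. f (z + \<i> * of_real s)) has_vector_derivative (\<i> * a - \<i> * b)) (at 0)"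
    unfolding has_vector_derivative_def by (simp add: scaleR_conv_of_real algebra_simps)
  then show ?thesis unfolding dy_def by (rule vector_derivative_at)
qed

lemma W_dw: "Wd f z a b \<Longrightarrow> dw f z = a"
  unfolding dw_def by (simp add: W_dx W_dy algebra_simps)

lemma W_dwbar: "Wd f z a b \<Longrightarrow> dwbar f z = b"
  unfolding dwbar_def by (simp add: W_dx W_dy algebra_simps)

lemma W_const: "Wd (\<lambda>z. c) z 0 0"
  unfolding Wd_def by (auto intro!: derivative_eq_intros)

lemma W_id: "Wd (\<lambda>z. z) z 1 0"
  unfolding Wd_def by (auto intro!: derivative_eq_intros)

lemma W_cnj: "Wd (\<lambda>z. cnj z) z 0 1"
  unfolding Wd_def using bounded_linear.has_derivative[OF bounded_linear_cnj has_derivative_ident]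
  by simp

lemma W_add: "Wd f z a b \<Longrightarrow> Wd g z c d \<Longrightarrow> Wd (\<lambda>z. f z + g z) z (a + c) (b + d)"
  unfolding Wd_def by (auto intro!: derivative_eq_intros simp: algebra_simps)

lemma W_diff: "Wd f z a b \<Longrightarrow> Wd g z c d \<Longrightarrow> Wd (\<lambda>z. f z - g z) z (a - c) (b - d)"
  unfolding Wd_def by (auto intro!: derivative_eq_intros simp: algebra_simps)

lemma W_mult: "Wd f z a b \<Longrightarrow> Wd g z c d \<Longrightarrow> Wd (\<lambda>z. f z * g z) z (f z * c + a * g z) (f z * d + b * g z)"
  unfolding Wd_def by (auto intro!: derivative_eq_intros simp: algebra_simps)

lemma W_chain: "(\<phi> has_field_derivative \<phi>') (at (f z)) \<Longrightarrow> Wd f z a b \<Longrightarrow> Wd (\<lambda>z. \<phi> (f z)) z (\<phi>' * a) (\<phi>' * b)"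
  unfolding Wd_def has_field_derivative_def
  by (drule (1) has_derivative_compose[rotated]) (simp add: algebra_simps)

lemma W_cnjf: "Wd f z a b \<Longrightarrow> Wd (\<lambda>z. cnj (f z)) z (cnj b) (cnj a)"
  unfolding Wd_def using bounded_linear.has_derivative[OF bounded_linear_cnj]
  by (fastforce simp: algebra_simps)

lemma W_inverse: "Wd f z a b \<Longrightarrow> f z \<noteq> 0 \<Longrightarrow> Wd (\<lambda>z. inverse (f z)) z (- (inverse (f z ^ 2)) * a) (- (inverse (f z ^ 2)) * b)"
proof -
  assume 1: "Wd f z a b" and 2: "f z \<noteq> 0"
  have "(inverse has_field_derivative - (inverse (f z) ^ Suc (Suc 0))) (at (f z))"
    using DERIV_inverse[OF 2] by simp
  then have "(inverse has_field_derivative - (inverse (f z ^ 2))) (at (f z))"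
    by (simp add: power2_eq_square)
  from W_chain[OF this 1] show ?thesis .
qed

lemma W_divide: "Wd f z a b \<Longrightarrow> Wd g z c d \<Longrightarrow> g z \<noteq> 0 \<Longrightarrow>
   Wd (\<lambda>z. f z / g z) z ((a * g z - f z * c) / (g z)^2) ((b * g z - f z * d) / (g z)^2)"
proof -
  assume 1: "Wd f z a b" and 2: "Wd g z c d" and 3: "g z \<noteq> 0"
  have "Wd (\<lambda>z. f z * inverse (g z)) z (f z * (- (inverse (g z ^ 2)) * c) + a * inverse (g z))
     (f z * (- (inverse (g z ^ 2)) * d) + b * inverse (g z))"
    by (rule W_mult[OF 1 W_inverse[OF 2 3]])
  moreover have "(f z * (- (inverse (g z ^ 2)) * c) + a * inverse (g z)) = ((a * g z - f z * c) / (g z)^2)"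
    "(f z * (- (inverse (g z ^ 2)) * d) + b * inverse (g z)) = ((b * g z - f z * d) / (g z)^2)"
    using 3 by (simp_all add: field_simps power2_eq_square)
  ultimately show ?thesis by (simp add: divide_inverse)
qed

lemma W_transform: "Wd f z a b \<Longrightarrow> open S \<Longrightarrow> z \<in> S \<Longrightarrow> (\<And>x. x \<in> S \<Longrightarrow> f x = g x) \<Longrightarrow> Wd g z a b"
proof -
  assume 1: "Wd f z a b" and 2: "open S" "z \<in> S" and 3: "\<And>x. x \<in> S \<Longrightarrow> f x = g x"
  show ?thesis using has_derivative_transform_within_open[of f _ z UNIV S g] 1 2 3 unfolding Wd_def by blast
qed

lemma W_eq: "Wd f z a b \<Longrightarrow> a = a' \<Longrightarrow> b = b' \<Longrightarrow> Wd f z a' b'"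
  by simp

lemma W_real:
  fixes fr :: "complex \<Rightarrow> real"
  assumes W: "Wd (\<lambda>z. of_real (fr z)) z a b" and d: "(\<phi> has_real_derivative \<phi>') (at (fr z))"
  shows "Wd (\<lambda>z. of_real (\<phi> (fr z))) z (of_real \<phi>' * a) (of_real \<phi>' * b)"
proof -
  let ?L = "\<lambda>h. a * h + b * cnj h"
  have F: "((\<lambda>z. complex_of_real (fr z)) has_derivative ?L) (at z)" using W unfolding Wd_def .
  have "((\<lambda>z. Im (complex_of_real (fr z))) has_derivative (\<lambda>h. Im (?L h))) (at z)"
    by (rule bounded_linear.has_derivative[OF bounded_linear_Im F])
  moreover have "((\<lambda>z. Im (complex_of_real (fr z))) has_derivative (\<lambda>h. 0)) (at z)"
    by simp
  ultimately have im0: "(\<lambda>h. Im (?L h)) = (\<lambda>h. 0)" by (rule has_derivative_unique)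
  have R: "(fr has_derivative (\<lambda>h. Re (?L h))) (at z)"
    using bounded_linear.has_derivative[OF bounded_linear_Re F] by simp
  have "((\<lambda>z. \<phi> (fr z)) has_derivative (\<lambda>h. \<phi>' * Re (?L h))) (at z)"
    using has_derivative_compose[OF R d[unfolded has_field_derivative_def]] by (simp add: mult.commute)
  then have "((\<lambda>z. complex_of_real (\<phi> (fr z))) has_derivative (\<lambda>h. of_real (\<phi>' * Re (?L h)))) (at z)"
    by (rule bounded_linear.has_derivative[OF bounded_linear_of_real])
  moreover have "\<And>h. of_real (\<phi>' * Re (?L h)) = of_real \<phi>' * a * h + of_real \<phi>' * b * cnj h"
  proof -
    fix h
    have "Im (?L h) = 0" using fun_cong[OF im0, of h] by simp
    then have "complex_of_real (Re (?L h)) = ?L h" by (simp add: complex_eq_iff)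
    then show "of_real (\<phi>' * Re (?L h)) = of_real \<phi>' * a * h + of_real \<phi>' * b * cnj h"
      by (metis (no_types, lifting) distrib_left mult.assoc of_real_mult)
  qed
  ultimately show ?thesis unfolding Wd_def by (simp add: mult.assoc)
qed

lemmas W_rules = W_const W_id W_cnj W_add W_diff W_mult W_divide W_cnjf

definition qf :: "complex \<Rightarrow> complex \<Rightarrow> complex" where
  "qf u z = 1 - cnj z * u"

definition Pf :: "real \<Rightarrow> complex \<Rightarrow> complex \<Rightarrow> complex" where
  "Pf k u z = exp (of_real k * (Ln (qf u z) - cnj (Ln (qf u z))))"

definition Qr :: "complex \<Rightarrow> complex \<Rightarrow> real" where
  "Qr u z = (cmod (1 - z * cnj u))\<^sup>2 / ((1 - (cmod z)\<^sup>2) * (1 - (cmod u)\<^sup>2))"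

lemma qf_Re: assumes "cmod z < 1" "cmod u < 1" shows "Re (qf u z) > 0"
proof -
  have "Re (cnj z * u) \<le> cmod (cnj z * u)" by (rule complex_Re_le_cmod)
  also have "\<dots> = cmod z * cmod u" by (simp add: norm_mult)
  also have "\<dots> < 1" using assms by (metis mult_strict_mono' norm_ge_zero mult_1_right less_le_trans mult_le_one less_eq_real_def mult_less_cancel_right2 abs_norm_cancel)
  finally show ?thesis by (simp add: qf_def)
qed

lemma qf_facts: assumes "cmod z < 1" "cmod u < 1"
  shows "qf u z \<notin> \<real>\<^sub>\<le>\<^sub>0" "qf u z \<noteq> 0" "1 - z * cnj u \<noteq> 0"
proof -
  have r: "Re (qf u z) > 0" by (rule qf_Re[OF assms])
  then show "qf u z \<notin> \<real>\<^sub>\<le>\<^sub>0" by (auto simp: complex_nonpos_Reals_iff)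
  show "qf u z \<noteq> 0" using r by auto
  have "cnj (qf u z) = 1 - z * cnj u" by (simp add: qf_def)
  then show "1 - z * cnj u \<noteq> 0" using r by (metis complex_cnj_zero_iff less_irrefl zero_complex.sel(1))
qed

lemma phase_Pf: assumes "cmod z < 1" "cmod u < 1" shows "phase k z u = Pf k u z"
proof -
  have nz: "qf u z \<noteq> 0" using qf_facts[OF assms] by blast
  have e: "Ln (qf u z) - cnj (Ln (qf u z)) = 2 * \<i> * of_real (Arg (qf u z))"
    using Arg_eq_Im_Ln[OF nz] by (simp add: complex_eq_iff)
  show ?thesis unfolding phase_def Pf_def e cis_conv_exp qf_def[symmetric]
    by (simp add: algebra_simps)
qed

lemma W_q: "Wd (qf u) z 0 (- u)"
proof -
  have "Wd (\<lambda>z. 1 - cnj z * u) z (0 - (cnj z * 0 + 0 * u)) (0 - (cnj z * 0 + 1 * u))"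
    by (rule W_rules)+
  then show ?thesis by (simp add: qf_def[abs_def])
qed

lemma W_P: assumes "cmod z < 1" "cmod u < 1"
  shows "Wd (Pf k u) z (Pf k u z * of_real k * cnj u / (1 - z * cnj u)) (- Pf k u z * of_real k * u / qf u z)"
proof -
  note qq = qf_facts[OF assms]
  have L: "Wd (\<lambda>z. Ln (qf u z)) z (inverse (qf u z) * 0) (inverse (qf u z) * (- u))"
    by (rule W_chain[OF has_field_derivative_Ln[OF qq(1)] W_q])
  have E: "Wd (\<lambda>z. of_real k * (Ln (qf u z) - cnj (Ln (qf u z)))) z
     (of_real k * ((inverse (qf u z) * 0) - cnj (inverse (qf u z) * (- u))) + 0 * (Ln (qf u z) - cnj (Ln (qf u z))))
     (of_real k * ((inverse (qf u z) * (- u)) - cnj (inverse (qf u z) * 0)) + 0 * (Ln (qf u z) - cnj (Ln (qf u z))))"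
    by (rule W_mult[OF W_const W_diff[OF L W_cnjf[OF L]]])
  have P: "Wd (Pf k u) z
     (exp (of_real k * (Ln (qf u z) - cnj (Ln (qf u z)))) * (of_real k * ((inverse (qf u z) * 0) - cnj (inverse (qf u z) * (- u))) + 0 * (Ln (qf u z) - cnj (Ln (qf u z)))))
     (exp (of_real k * (Ln (qf u z) - cnj (Ln (qf u z)))) * (of_real k * ((inverse (qf u z) * (- u)) - cnj (inverse (qf u z) * 0)) + 0 * (Ln (qf u z) - cnj (Ln (qf u z)))))"
    unfolding Pf_def[abs_def] by (rule W_chain[OF DERIV_exp E])
  have cq: "cnj (qf u z) = 1 - z * cnj u" by (simp add: qf_def)
  show ?thesis
    apply (rule W_eq[OF P])
    using qq unfolding Pf_def[symmetric] by (simp_all add: field_simps cq)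
qed

lemma Qr_complex: assumes "cmod z < 1" "cmod u < 1"
  shows "of_real (Qr u z) = (1 - z * cnj u) * (1 - cnj z * u) / ((1 - z * cnj z) * (1 - u * cnj u))"
proof -
  have "cnj (1 - z * cnj u) = 1 - cnj z * u" by simp
  then show ?thesis unfolding Qr_def
    by (simp add: complex_norm_square del: of_real_power)
qed

definition aQ :: "complex \<Rightarrow> complex \<Rightarrow> complex" where
  "aQ u z = (1 - cnj z * u) * (cnj z - cnj u) / ((1 - z * cnj z)^2 * (1 - u * cnj u))"
definition bQ :: "complex \<Rightarrow> complex \<Rightarrow> complex" where
  "bQ u z = (1 - z * cnj u) * (z - u) / ((1 - z * cnj z)^2 * (1 - u * cnj u))"

lemma one_minus_nz: assumes "cmod z < 1" shows "1 - z * cnj z \<noteq> 0"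
proof -
  have "z * cnj z = of_real ((cmod z)^2)" by (rule complex_norm_square[symmetric])
  moreover have "(cmod z)^2 < 1" using assms by (simp add: power_less_one_iff abs_square_less_1)
  ultimately show ?thesis by (metis eq_iff_diff_eq_0 less_irrefl of_real_eq_1_iff)
qed

lemma W_Q: assumes "cmod z < 1" "cmod u < 1"
  shows "Wd (\<lambda>z. of_real (Qr u z)) z (aQ u z) (bQ u z)"
proof -
  have nz1: "1 - z * cnj z \<noteq> 0" by (rule one_minus_nz[OF assms(1)])
  have nz2: "1 - u * cnj u \<noteq> 0" by (rule one_minus_nz[OF assms(2)])
  have "\<exists>a b. Wd (\<lambda>z. (1 - z * cnj u) * (1 - cnj z * u) / ((1 - z * cnj z) * (1 - u * cnj u))) z a b
        \<and> a = aQ u z \<and> b = bQ u z"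
    apply (intro exI conjI)
      apply (rule W_rules)+
      apply (rule no_zero_divisors[OF nz1 nz2])
    subgoal using nz1 nz2 by (simp add: aQ_def frac_eq_eq) algebra
    subgoal using nz1 nz2 by (simp add: bQ_def frac_eq_eq) algebra
    done
  then obtain a b where W: "Wd (\<lambda>z. (1 - z * cnj u) * (1 - cnj z * u) / ((1 - z * cnj z) * (1 - u * cnj u))) z a b"
     and ab: "a = aQ u z" "b = bQ u z" by blast
  show ?thesis
    apply (rule W_transform[OF W_eq[OF W ab] open_ball[of 0 1]])
    using assms Qr_complex by auto
qed



definition rho :: "real \<Rightarrow> real \<Rightarrow> real" where "rho t Q = sqrt ((cosh (t/2))^2 - Q)"
definition phf :: "real \<Rightarrow> real \<Rightarrow> real \<Rightarrow> real" where
  "phf k t Q = 2 * k * (ln (rho t Q + cosh (t/2)) - ln Q / 2)"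

definition gR :: "real \<Rightarrow> real \<Rightarrow> real \<Rightarrow> real" where
  "gR k t Q = 1/(2*pi) * (cosh (phf k t Q) / rho t Q)"
definition g1 :: "real \<Rightarrow> real \<Rightarrow> real \<Rightarrow> real" where
  "g1 k t Q = 1/(2*pi) * (cosh (phf k t Q)/(2 * rho t Q ^ 3) - k * cosh (t/2) * sinh (phf k t Q) / (rho t Q ^ 2 * Q))"

lemma dom_facts: assumes "0 < Q" "Q < (cosh (t/2))^2"
  shows "rho t Q > 0" "(rho t Q)^2 = (cosh (t/2))^2 - Q" "rho t Q + cosh (t/2) > 0" "cosh (t/2) > 0"
    "rho t Q \<noteq> 0" "Q \<noteq> 0" "rho t Q + cosh (t/2) \<noteq> 0"
proof -
  have "rho t Q \<ge> 0" using assms unfolding rho_def by simp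
  then show "rho t Q + cosh (t/2) \<noteq> 0" by (smt (verit) cosh_real_pos)
  show "Q \<noteq> 0" using assms by auto
  have "rho t Q > 0" using assms unfolding rho_def by simp
  then show "rho t Q \<noteq> 0" by simp
  show "rho t Q > 0" using assms unfolding rho_def by simp
  show "(rho t Q)^2 = (cosh (t/2))^2 - Q" using assms unfolding rho_def by simp
  show "cosh (t/2) > 0" by simp
  then show "rho t Q + cosh (t/2) > 0" using \<open>rho t Q > 0\<close> by (simp add: add_pos_pos)
qed

lemma rho_dQ: assumes "0 < Q" "Q < (cosh (t/2))^2"
  shows "((\<lambda>Q. rho t Q) has_real_derivative (- 1 / (2 * rho t Q))) (at Q)"
  using assms unfolding rho_def
  by (auto intro!: derivative_eq_intros simp: field_simps)

lemma alg1:
  fixes r C Q k :: real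
  assumes "r > 0" "Q > 0" "r + C > 0" "r^2 = C^2 - Q"
  shows "2 * k * ((- 1 / (2 * r)) / (r + C) - (1 / Q) / 2) = - k * C / (r * Q)"
proof -
  define iu where "iu = 1/r"
  define iR where "iR = 1/(r+C)"
  define iq where "iq = 1/Q"
  have h: "r * iu = 1" "(r + C) * iR = 1" "Q * iq = 1" using assms by (simp_all add: iu_def iR_def iq_def)
  have e: "\<And>x. x / r = x * iu" "\<And>x. x / (r + C) = x * iR" "\<And>x. x / Q = x * iq"
     "\<And>x a b. x / (a * b) = x / a / (b::real)"
    by (simp_all add: iu_def iR_def iq_def)
  show ?thesis unfolding e using h assms(4) by algebra
qed

lemma phf_dQ: assumes "0 < Q" "Q < (cosh (t/2))^2"
  shows "((\<lambda>Q. phf k t Q) has_real_derivative (- k * cosh (t/2) / (rho t Q * Q))) (at Q)"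
proof -
  note df = dom_facts[OF assms]
  have "((\<lambda>Q. phf k t Q) has_real_derivative 2 * k * ((- 1 / (2 * rho t Q)) / (rho t Q + cosh (t/2)) - (1 / Q) / 2)) (at Q)"
    unfolding phf_def[abs_def]
    apply (rule derivative_eq_intros rho_dQ[OF assms] refl | rule HOL.refl | (simp add: df(1,3-7) assms; fail) | rule df(3) | rule df(4) | (insert df assms, linarith))+
    using df by (auto simp: ac_simps intro!: add_pos_pos)
  moreover have "2 * k * ((- 1 / (2 * rho t Q)) / (rho t Q + cosh (t/2)) - (1 / Q) / 2) = - k * cosh (t/2) / (rho t Q * Q)"
    by (rule alg1[OF df(1) assms(1) df(3) df(2)])
  ultimately show ?thesis by simp
qed

definition g2 :: "real \<Rightarrow> real \<Rightarrow> real \<Rightarrow> real" where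
  "g2 k t Q = 1/(2*pi) * (3 * cosh (phf k t Q) / (4 * rho t Q ^ 5)
     - k * cosh (t/2) * sinh (phf k t Q) / (2 * rho t Q ^ 4 * Q)
     - k * cosh (t/2) * (Q - rho t Q ^ 2) * sinh (phf k t Q) / (rho t Q ^ 4 * Q^2)
     + k^2 * (cosh (t/2))^2 * cosh (phf k t Q) / (rho t Q ^ 3 * Q^2))"
definition gt :: "real \<Rightarrow> real \<Rightarrow> real \<Rightarrow> real" where
  "gt k t Q = 1/(2*pi) * (- cosh (t/2) * sinh (t/2) * cosh (phf k t Q) / (2 * rho t Q ^ 3)
     + k * sinh (t/2) * sinh (phf k t Q) / rho t Q ^ 2)"
definition gtt :: "real \<Rightarrow> real \<Rightarrow> real \<Rightarrow> real" where
  "gtt k t Q = 1/(2*pi) * (- 1/2 * (((sinh (t/2))^2 + (cosh (t/2))^2) / (2 * rho t Q ^ 3) * cosh (phf k t Q)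
      - 3 * (cosh (t/2))^2 * (sinh (t/2))^2 / (2 * rho t Q ^ 5) * cosh (phf k t Q)
      + cosh (t/2) * (sinh (t/2))^2 * sinh (phf k t Q) * k / rho t Q ^ 4)
    + k * (cosh (t/2) * sinh (phf k t Q) / (2 * rho t Q ^ 2) + k * (sinh (t/2))^2 * cosh (phf k t Q) / rho t Q ^ 3
      - cosh (t/2) * (sinh (t/2))^2 * sinh (phf k t Q) / rho t Q ^ 4))"

lemma gR_dQ: assumes "0 < Q" "Q < (cosh (t/2))^2"
  shows "((\<lambda>Q. gR k t Q) has_real_derivative g1 k t Q) (at Q)"
proof -
  note df = dom_facts[OF assms]
  show ?thesis unfolding gR_def[abs_def] g1_def
    apply (rule derivative_eq_intros rho_dQ[OF assms] phf_dQ[OF assms] refl | rule HOL.refl | (simp add: df(1,3-7) assms; fail) | rule df(3) | rule df(4) | (insert df assms, linarith))+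
    using df assms by (simp add: field_simps power2_eq_square power3_eq_cube)
qed

lemma g1_dQ: assumes "0 < Q" "Q < (cosh (t/2))^2"
  shows "((\<lambda>Q. g1 k t Q) has_real_derivative g2 k t Q) (at Q)"
proof -
  note df = dom_facts[OF assms]
  show ?thesis unfolding g1_def[abs_def] g2_def
    apply (rule derivative_eq_intros rho_dQ[OF assms] phf_dQ[OF assms] refl | rule HOL.refl | (simp add: df(1,3-7) assms; fail) | rule df(3) | rule df(4) | (insert df assms, linarith))+
    using df assms by (simp add: field_simps eval_nat_numeral)
qed

lemma rho_dt: assumes "0 < Q" "Q < (cosh (t/2))^2"
  shows "((\<lambda>s. rho s Q) has_real_derivative (cosh (t/2) * sinh (t/2) / (2 * rho t Q))) (at t)"
proof -
  note df = dom_facts[OF assms]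
  show ?thesis using assms unfolding rho_def[abs_def]
    by (auto intro!: derivative_eq_intros simp: field_simps)
qed

lemma phf_dt: assumes "0 < Q" "Q < (cosh (t/2))^2"
  shows "((\<lambda>s. phf k s Q) has_real_derivative (k * sinh (t/2) / rho t Q)) (at t)"
proof -
  note df = dom_facts[OF assms]
  have "((\<lambda>s. phf k s Q) has_real_derivative
     2 * k * ((cosh (t/2) * sinh (t/2) / (2 * rho t Q) + sinh (t/2) / 2) / (rho t Q + cosh (t/2)))) (at t)"
    unfolding phf_def[abs_def]
    apply (rule derivative_eq_intros rho_dt[OF assms] refl | rule HOL.refl | (simp add: df(1,3-7) assms; fail) | rule df(3) | rule df(4))+
    done
  moreover have "2 * k * ((cosh (t/2) * sinh (t/2) / (2 * rho t Q) + sinh (t/2) / 2) / (rho t Q + cosh (t/2)))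
      = k * sinh (t/2) / rho t Q"
  proof -
    define r where "r = rho t Q"
    define C where "C = cosh (t/2)"
    define S where "S = sinh (t/2)"
    define iu where "iu = 1/r"
    define iR where "iR = 1/(r+C)"
    have h: "r * iu = 1" "(r + C) * iR = 1" using df unfolding r_def C_def by (simp_all add: iu_def iR_def r_def C_def)
    have e: "\<And>x. x / r = x * iu" "\<And>x. x / (r + C) = x * iR"
       "\<And>x a b. x / (a * b) = x / a / (b::real)"
      by (simp_all add: iu_def iR_def)
    have "2 * k * ((C * S / (2 * r) + S / 2) / (r + C)) = k * S / r"
      unfolding e using h by algebra
    then show ?thesis by (simp add: r_def C_def S_def)
  qed
  ultimately show ?thesis by simp
qed

lemma gR_dt: assumes "0 < Q" "Q < (cosh (t/2))^2"
  shows "((\<lambda>s. gR k s Q) has_real_derivative gt k t Q) (at t)"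
proof -
  note df = dom_facts[OF assms]
  show ?thesis unfolding gR_def[abs_def] gt_def
    apply (rule derivative_eq_intros rho_dt[OF assms] phf_dt[OF assms] refl | rule HOL.refl | (simp add: df(1,3-7) assms; fail) | rule df(3) | rule df(4))+
    using df(1,3-7) assms by (simp add: field_simps eval_nat_numeral)
qed

lemma gt_dt: assumes "0 < Q" "Q < (cosh (t/2))^2"
  shows "((\<lambda>s. gt k s Q) has_real_derivative gtt k t Q) (at t)"
proof -
  note df = dom_facts[OF assms]
  show ?thesis unfolding gt_def[abs_def] gtt_def
    apply (rule derivative_eq_intros rho_dt[OF assms] phf_dt[OF assms] refl | rule HOL.refl | (simp add: df(1,3-7) assms; fail) | rule df(3) | rule df(4))+
    using df(1,3-7) assms by (simp add: field_simps eval_nat_numeral)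
qed

lemma radial_alg:
  fixes k C S r Q ch sh :: real
  assumes r: "r > 0" and Q: "Q > 0" and S2: "S^2 = C^2 - 1" and r2: "r^2 = C^2 - Q"
  shows "Q*(Q-1)*(3*ch/(4*r^5)-k * C * sh/(2*r^4*Q)-k*C*(Q-r^2)* sh/(r^4*Q^2)+k^2*C^2*ch/(r^3*Q^2))
        + (2*Q-1)*(ch/(2*r^3)-k * C * sh/(r^2*Q)) + (k^2/Q+1/4)*(ch/r)
      = -1/2*((S^2+C^2)/(2*r^3)*ch-3*C^2*S^2/(2*r^5)*ch+C*S^2* sh*k/r^4)+k*(C * sh/(2*r^2)+k*S^2*ch/r^3-C*S^2* sh/r^4)"
proof -
  define iu where "iu = 1/r"
  define iq where "iq = 1/Q"
  have iu: "r * iu = 1" using r by (simp add: iu_def)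
  have iq: "Q * iq = 1" using Q by (simp add: iq_def)
  have e: "\<And>x n. x / r^n = x * iu^n" "\<And>x n. x / Q^n = x * iq^n" "\<And>x. x/r = x*iu" "\<And>x. x/Q = x*iq"
    by (simp_all add: iu_def iq_def power_one_over divide_inverse power_inverse) 
  have e2: "\<And>x a b. x/(a*b) = (x/a)/(b::real)" by simp
  show ?thesis unfolding e2 e using iu iq r2 S2 by algebra
qed

lemma fac: fixes Q c a b d K :: real
  shows "Q*(Q-1)*(c*a) + (2*Q-1)*(c*b) + K*(c*d) = c*(Q*(Q-1)*a + (2*Q-1)*b + K*d)"
  by algebra

lemma radial: assumes "0 < Q" "Q < (cosh (t/2))^2"
  shows "Q * (Q - 1) * g2 k t Q + (2 * Q - 1) * g1 k t Q + (k^2 / Q + 1/4) * gR k t Q = gtt k t Q"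
proof -
  note df = dom_facts[OF assms]
  have S2: "(sinh (t/2))^2 = (cosh (t/2))^2 - 1" by (simp add: cosh_square_eq)
  note A = radial_alg[OF df(1) assms(1) S2 df(2), where k=k and ch="cosh (phf k t Q)" and sh="sinh (phf k t Q)"]
  have "Q * (Q - 1) * g2 k t Q + (2 * Q - 1) * g1 k t Q + (k^2 / Q + 1/4) * gR k t Q
      = 1/(2*pi) * (Q*(Q-1)*(3*cosh (phf k t Q)/(4*rho t Q^5)-k * cosh (t/2) * sinh (phf k t Q)/(2*rho t Q^4*Q)-k*cosh (t/2)*(Q-rho t Q^2)* sinh (phf k t Q)/(rho t Q^4*Q^2)+k^2*(cosh (t/2))^2*cosh (phf k t Q)/(rho t Q^3*Q^2))
        + (2*Q-1)*(cosh (phf k t Q)/(2*rho t Q^3)-k * cosh (t/2) * sinh (phf k t Q)/(rho t Q^2*Q)) + (k^2/Q+1/4)*(cosh (phf k t Q)/rho t Q))"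
    unfolding g2_def g1_def gR_def by (rule fac)
  also have "\<dots> = gtt k t Q" unfolding gtt_def using A by simp
  finally show ?thesis .
qed




lemma norm_identity:
  "(cmod (1 - z * cnj u))^2 - (1 - (cmod z)^2) * (1 - (cmod u)^2) = (cmod (z - u))^2"
proof -
  have "complex_of_real ((cmod (1 - z * cnj u))^2 - (1 - (cmod z)^2) * (1 - (cmod u)^2))
      = (1 - z * cnj u) * cnj (1 - z * cnj u) - (1 - z * cnj z) * (1 - u * cnj u)"
    by (simp only: of_real_diff of_real_mult of_real_1 complex_norm_square)
  also have "\<dots> = (z - u) * cnj (z - u)" by (simp add: algebra_simps)
  also have "\<dots> = complex_of_real ((cmod (z - u))^2)" by (simp only: complex_norm_square)
  finally show ?thesis by (simp only: of_real_eq_iff)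
qed

lemma one_minus_sq_pos: "cmod z < 1 \<Longrightarrow> 1 - (cmod z)^2 > 0"
  by (simp add: abs_square_less_1)

lemma Qr_ge1: assumes "cmod z < 1" "cmod u < 1" shows "Qr u z \<ge> 1"
proof -
  have B: "(1 - (cmod z)^2) * (1 - (cmod u)^2) > 0" using one_minus_sq_pos assms by simp
  have "(cmod (1 - z * cnj u))^2 \<ge> (1 - (cmod z)^2) * (1 - (cmod u)^2)"
    using norm_identity[of z u] by (smt (verit) zero_le_power2)
  then show ?thesis unfolding Qr_def using B by simp
qed

lemma hdist_Qr: "hdist z u = 2 * arcosh (sqrt (Qr u z))"
  unfolding hdist_def Qr_def ..

lemma cosh_half_hdist: assumes "cmod z < 1" "cmod u < 1"
  shows "(cosh (hdist z u / 2))^2 = Qr u z"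
proof -
  have "sqrt (Qr u z) \<ge> 1" using Qr_ge1[OF assms] by simp
  then have "cosh (arcosh (sqrt (Qr u z))) = sqrt (Qr u z)" by (simp add: cosh_arcosh_real)
  then show ?thesis unfolding hdist_Qr using Qr_ge1[OF assms] by simp
qed

lemma hdist_mobius: assumes "cmod w < 1" "cmod u < 1"
  shows "hdist 0 ((w - u) / (1 - cnj u * w)) = hdist w u"
proof -
  define A where "A = (cmod (1 - w * cnj u))^2"
  define B where "B = (1 - (cmod w)^2) * (1 - (cmod u)^2)"
  have B: "B > 0" unfolding B_def using one_minus_sq_pos assms by simp
  have AB: "A - B = (cmod (w - u))^2" unfolding A_def B_def by (rule norm_identity)
  have A: "A > 0" using AB B by (smt (verit) zero_le_power2)
  have c: "cmod (1 - cnj u * w) = cmod (1 - w * cnj u)" by (simp add: mult.commute)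
  have "(cmod ((w - u) / (1 - cnj u * w)))^2 = (cmod (w - u))^2 / A"
    unfolding A_def by (simp add: norm_divide c power_divide)
  then have "(cmod ((w - u) / (1 - cnj u * w)))^2 = (A - B) / A" unfolding AB .
  then have "1 - (cmod ((w - u) / (1 - cnj u * w)))^2 = B / A" using A by (simp add: field_simps)
  then have "(cmod (1 - 0 * cnj ((w - u) / (1 - cnj u * w))))\<^sup>2 /
        ((1 - (cmod 0)\<^sup>2) * (1 - (cmod ((w - u) / (1 - cnj u * w)))\<^sup>2)) = A / B"
    using A B by simp
  then show ?thesis unfolding hdist_def A_def B_def by (simp add: mult.commute)
qed

lemma V_part1: assumes "cmod w < 1" "cmod u < 1"
  shows "V_fun k t w u = phase k w u * v_fun k t (hdist w u)"
  unfolding V_fun_def Tk_def using hdist_mobius[OF assms] by simp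


lemma gR_conn: assumes "0 < Q" "Q < (cosh (t/2))^2"
  shows "1 / (2 * pi) * pos_pow_neg_half ((cosh (t/2))^2 - Q) * cosh (2 * \<bar>k\<bar> * arsinh (sqrt (- (1 - (cosh (t/2))^2 / Q))))
     = gR k t Q"
proof -
  note df = dom_facts[OF assms]
  define C where "C = cosh (t/2)"
  define r where "r = rho t Q"
  have C: "C > 0" unfolding C_def by simp
  have r: "r > 0" "r^2 = C^2 - Q" using df unfolding r_def C_def by auto
  have rs: "sqrt (C^2 - Q) = r" unfolding r_def rho_def C_def ..
  have p: "pos_pow_neg_half (C^2 - Q) = 1 / r"
  proof -
    have "C^2 - Q > 0" using assms unfolding C_def by simp
    then have "pos_pow_neg_half (C^2 - Q) = inverse ((C^2 - Q) powr (1/2))"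
      unfolding pos_pow_neg_half_def by (simp add: powr_minus[symmetric])
    also have "\<dots> = 1 / r" using \<open>C^2 - Q > 0\<close> rs by (simp add: powr_half_sqrt inverse_eq_divide)
    finally show ?thesis .
  qed
  have sQ: "sqrt Q > 0" using assms by simp
  have y: "sqrt (- (1 - C^2 / Q)) = r / sqrt Q"
  proof -
    have "- (1 - C^2 / Q) = (C^2 - Q) / Q" using assms by (simp add: field_simps)
    then show ?thesis using rs by (simp add: real_sqrt_divide)
  qed
  have y2: "sqrt ((r / sqrt Q)^2 + 1) = C / sqrt Q"
  proof -
    have "(r / sqrt Q)^2 + 1 = C^2 / Q" using r assms by (simp add: power_divide field_simps)
    then show ?thesis using C by (simp add: real_sqrt_divide)
  qed
  have ash: "arsinh (sqrt (- (1 - C^2 / Q))) = ln (r + C) - ln Q / 2"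
  proof -
    have "arsinh (sqrt (- (1 - C^2 / Q))) = ln (r / sqrt Q + C / sqrt Q)"
      unfolding y arsinh_real_def y2 ..
    also have "\<dots> = ln ((r + C) / sqrt Q)" by (simp add: add_divide_distrib)
    also have "\<dots> = ln (r + C) - ln (sqrt Q)" using r C sQ by (simp add: ln_div)
    also have "\<dots> = ln (r + C) - ln Q / 2" using assms by (simp add: ln_sqrt)
    finally show ?thesis .
  qed
  have ck: "cosh (2 * \<bar>k\<bar> * x) = cosh (2 * k * x)" for x
  proof (cases "k \<ge> 0")
    case True then show ?thesis by simp
  next
    case False
    then have "2 * \<bar>k\<bar> * x = - (2 * k * x)" by simp
    then show ?thesis by (simp only: cosh_minus)
  qed
  show ?thesis unfolding C_def[symmetric] p ash ck gR_def phf_def r_def[symmetric]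
    by simp
qed

lemma V_formula: assumes "cmod z < 1" "cmod u < 1" "Qr u z < (cosh (t/2))^2"
  shows "V_fun k t z u = Pf k u z * of_real (gR k t (Qr u z))"
proof -
  have Q1: "Qr u z \<ge> 1" by (rule Qr_ge1[OF assms(1,2)])
  then have Q0: "Qr u z > 0" by simp
  have le: "1 - (cosh (t/2))^2 / Qr u z \<le> 0" using assms(3) Q0 by (simp add: field_simps)
  have "V_fun k t z u = phase k z u * v_fun k t (hdist z u)" by (rule V_part1[OF assms(1,2)])
  also have "\<dots> = Pf k u z * (complex_of_real (1 / (2 * pi) * pos_pow_neg_half ((cosh (t/2))^2 - Qr u z))
      * hyp2F1 \<bar>k\<bar> (- \<bar>k\<bar>) (1/2) (complex_of_real (1 - (cosh (t/2))^2 / Qr u z)))"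
    unfolding v_fun_def cosh_half_hdist[OF assms(1,2)] phase_Pf[OF assms(1,2)] ..
  also have "\<dots> = Pf k u z * of_real (1 / (2 * pi) * pos_pow_neg_half ((cosh (t/2))^2 - Qr u z)
      * cosh (2 * \<bar>k\<bar> * arsinh (sqrt (- (1 - (cosh (t/2))^2 / Qr u z)))))"
    unfolding hyp2F1_neg[OF le] by simp
  also have "\<dots> = Pf k u z * of_real (gR k t (Qr u z))"
    unfolding gR_conn[OF Q0 assms(3)] ..
  finally show ?thesis .
qed

lemma final_alg:
  fixes P G Ga Gb w wc u uc k Q M D q qc :: complex
  assumes hM: "M = 1 - w * wc" and hD: "D = 1 - u * uc" and hq: "q = 1 - wc * u" and hqc: "qc = 1 - w * uc"
    and hQ: "Q * (M * D) = q * qc"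
    and nz: "M \<noteq> 0" "D \<noteq> 0" "q \<noteq> 0" "qc \<noteq> 0" "Q \<noteq> 0"
  shows
  "M^2 * (P * (Ga * ((2 * q * qc - M * D) / (M^3 * D)) + Gb * (q * (wc - uc) / (M^2 * D)) * (qc * (w - u) / (M^2 * D)))
          + (P * k * uc / qc) * (Ga * (qc * (w - u) / (M^2 * D)))
          - k * u * (P * (inverse q * (Ga * (q * (wc - uc) / (M^2 * D)))) + (P * k * uc / qc) * (inverse q * G)))
   + k * M * w * (P * (Ga * (q * (wc - uc) / (M^2 * D))) + (P * k * uc / qc) * G)
   - k * M * wc * (P * (Ga * (qc * (w - u) / (M^2 * D))) + (- k * u) * (P * (inverse q * G)))
   - k^2 * (w * wc) * (P * G) + (k^2 + 1/4) * (P * G)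
      = P * (Q * (Q - 1) * Gb + (2 * Q - 1) * Ga + (k^2 / Q + 1/4) * G)"
  using nz apply (simp add: field_simps)
  using hM hD hq hqc hQ by algebra


lemma W_pow2: "Wd f z a b \<Longrightarrow> Wd (\<lambda>z. (f z)^2) z (f z * a + a * f z) (f z * b + b * f z)"
  using W_mult[of f z a b f a b] by (simp add: power2_eq_square)

lemma W_bQ: assumes "cmod z < 1" "cmod u < 1"
  shows "\<exists>b. Wd (bQ u) z ((2 * (1 - cnj z * u) * (1 - z * cnj u) - (1 - z * cnj z) * (1 - u * cnj u))
           / ((1 - z * cnj z)^3 * (1 - u * cnj u))) b"
proof -
  have nz1: "1 - z * cnj z \<noteq> 0" by (rule one_minus_nz[OF assms(1)])
  have nz2: "1 - u * cnj u \<noteq> 0" by (rule one_minus_nz[OF assms(2)])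
  have "\<exists>a b. Wd (\<lambda>z. (1 - z * cnj u) * (z - u) / ((1 - z * cnj z)^2 * (1 - u * cnj u))) z a b
        \<and> a = ((2 * (1 - cnj z * u) * (1 - z * cnj u) - (1 - z * cnj z) * (1 - u * cnj u))
           / ((1 - z * cnj z)^3 * (1 - u * cnj u)))"
    apply (intro exI conjI)
     apply (rule W_rules W_pow2)+
     apply (rule no_zero_divisors[OF power_not_zero[OF nz1] nz2])
    using nz1 nz2 by (simp add: frac_eq_eq) algebra
  then show ?thesis unfolding bQ_def[abs_def] by blast
qed

definition SS :: "real \<Rightarrow> complex \<Rightarrow> complex set" where
  "SS t u = ball 0 1 \<inter> Qr u -` {..< (cosh (t/2))^2}"

lemma SS_open: assumes "cmod u < 1" shows "open (SS t u)"
proof -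
  have "continuous_on (ball 0 1) (Qr u)"
    unfolding Qr_def
  proof (intro continuous_intros ballI)
    fix z :: complex assume "z \<in> ball 0 1"
    then have "cmod z < 1" by (simp add: dist_norm)
    have "(cmod z)^2 < 1" "(cmod u)^2 < 1" using one_minus_sq_pos \<open>cmod z < 1\<close> assms by auto
    then show "(1 - (cmod z)\<^sup>2) * (1 - (cmod u)\<^sup>2) \<noteq> 0" by simp
  qed
  then show ?thesis unfolding SS_def by (rule continuous_open_preimage) auto
qed

lemma SS_mem: "z \<in> SS t u \<longleftrightarrow> cmod z < 1 \<and> Qr u z < (cosh (t/2))^2"
  unfolding SS_def by auto

lemma W_G: assumes "cmod z < 1" "cmod u < 1" "Qr u z < (cosh (t/2))^2"
  shows "Wd (\<lambda>z. of_real (gR k t (Qr u z))) z (of_real (g1 k t (Qr u z)) * aQ u z) (of_real (g1 k t (Qr u z)) * bQ u z)"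
proof -
  have Q0: "0 < Qr u z" using Qr_ge1[OF assms(1,2)] by simp
  show ?thesis by (rule W_real[OF W_Q[OF assms(1,2)] gR_dQ[OF Q0 assms(3)]])
qed

lemma W_G1: assumes "cmod z < 1" "cmod u < 1" "Qr u z < (cosh (t/2))^2"
  shows "Wd (\<lambda>z. of_real (g1 k t (Qr u z))) z (of_real (g2 k t (Qr u z)) * aQ u z) (of_real (g2 k t (Qr u z)) * bQ u z)"
proof -
  have Q0: "0 < Qr u z" using Qr_ge1[OF assms(1,2)] by simp
  show ?thesis by (rule W_real[OF W_Q[OF assms(1,2)] g1_dQ[OF Q0 assms(3)]])
qed

definition aPf :: "real \<Rightarrow> complex \<Rightarrow> complex \<Rightarrow> complex" where
  "aPf k u z = Pf k u z * of_real k * cnj u / (1 - z * cnj u)"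

definition bVf :: "real \<Rightarrow> real \<Rightarrow> complex \<Rightarrow> complex \<Rightarrow> complex" where
  "bVf k t u z = Pf k u z * (of_real (g1 k t (Qr u z)) * bQ u z)
     + (- of_real k * u) * (Pf k u z * (inverse (qf u z) * of_real (gR k t (Qr u z))))"

lemma W_V: assumes "cmod u < 1" "z \<in> SS t u" "\<And>y. y \<in> SS t u \<Longrightarrow> F y = V_fun k t y u"
  shows "Wd F z (Pf k u z * (of_real (g1 k t (Qr u z)) * aQ u z) + aPf k u z * of_real (gR k t (Qr u z)))
                (bVf k t u z)"
proof -
  have z: "cmod z < 1" "Qr u z < (cosh (t/2))^2" using assms(2) SS_mem by auto
  note qq = qf_facts[OF z(1) assms(1)]
  have W: "Wd (\<lambda>z. Pf k u z * of_real (gR k t (Qr u z))) z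
      (Pf k u z * (of_real (g1 k t (Qr u z)) * aQ u z) + (Pf k u z * of_real k * cnj u / (1 - z * cnj u)) * of_real (gR k t (Qr u z)))
      (Pf k u z * (of_real (g1 k t (Qr u z)) * bQ u z) + (- Pf k u z * of_real k * u / qf u z) * of_real (gR k t (Qr u z)))"
    by (rule W_mult[OF W_P[OF z(1) assms(1)] W_G[OF z(1) assms(1) z(2)]])
  have W2: "Wd (\<lambda>z. Pf k u z * of_real (gR k t (Qr u z))) z
      (Pf k u z * (of_real (g1 k t (Qr u z)) * aQ u z) + aPf k u z * of_real (gR k t (Qr u z)))
      (bVf k t u z)"
    apply (rule W_eq[OF W])
    unfolding aPf_def bVf_def using qq by (simp_all add: field_simps)
  show ?thesis
  proof (rule W_transform[OF W2 SS_open[OF assms(1)] assms(2)])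
    fix y assume y: "y \<in> SS t u"
    then have "cmod y < 1" "Qr u y < (cosh (t/2))^2" using SS_mem by auto
    then show "Pf k u y * of_real (gR k t (Qr u y)) = F y"
      using V_formula[OF _ assms(1)] assms(3)[OF y] by simp
  qed
qed

lemma W_bV: assumes "cmod u < 1" "z \<in> SS t u"
  shows "\<exists>b. Wd (bVf k t u) z
     (let P = Pf k u z; G = of_real (gR k t (Qr u z)); G1 = of_real (g1 k t (Qr u z)); G2 = of_real (g2 k t (Qr u z));
          M = 1 - z * cnj z; D = 1 - u * cnj u; q = 1 - cnj z * u; qc = 1 - z * cnj u;
          aQ = q * (cnj z - cnj u) / (M^2 * D); bQ = qc * (z - u) / (M^2 * D);
          dbQ = (2 * q * qc - M * D) / (M^3 * D); aP = P * of_real k * cnj u / qc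
      in P * (G1 * dbQ + G2 * aQ * bQ) + aP * (G1 * bQ) - of_real k * u * (P * (inverse q * (G1 * aQ)) + aP * (inverse q * G))) b"
proof -
  have z: "cmod z < 1" "Qr u z < (cosh (t/2))^2" using assms(2) SS_mem by auto
  note qq = qf_facts[OF z(1) assms(1)]
  obtain bb where WbQ: "Wd (bQ u) z ((2 * (1 - cnj z * u) * (1 - z * cnj u) - (1 - z * cnj z) * (1 - u * cnj u))
           / ((1 - z * cnj z)^3 * (1 - u * cnj u))) bb" using W_bQ[OF z(1) assms(1)] by blast
  have Wiq: "Wd (\<lambda>z. inverse (qf u z)) z (- (inverse (qf u z ^ 2)) * 0) (- (inverse (qf u z ^ 2)) * (- u))"
    by (rule W_inverse[OF W_q qq(2)])
  note W = W_add[OF W_mult[OF W_P[OF z(1) assms(1)] W_mult[OF W_G1[OF z(1) assms(1) z(2)] WbQ]]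
                   W_mult[OF W_const[of "- of_real k * u"] W_mult[OF W_P[OF z(1) assms(1)] W_mult[OF Wiq W_G[OF z(1) assms(1) z(2)]]]]]
  have e: "bVf k t u = (\<lambda>z. Pf k u z * (of_real (g1 k t (Qr u z)) * bQ u z)
     + (- of_real k * u) * (Pf k u z * (inverse (qf u z) * of_real (gR k t (Qr u z)))))"
    by (simp add: bVf_def fun_eq_iff)
  show ?thesis unfolding Let_def e
    apply (rule exI)
    apply (rule W_eq[OF W])
    unfolding aQ_def bQ_def qf_def by simp_all
qed


lemma Dop_main:
  assumes u: "cmod u < 1" and w: "w \<in> SS t u" and F: "\<And>y. y \<in> SS t u \<Longrightarrow> F y = V_fun k t y u"
  shows "Dop k F w = Pf k u w * of_real (gtt k t (Qr u w))"
proof -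
  have w1: "cmod w < 1" "Qr u w < (cosh (t/2))^2" using w SS_mem by auto
  note qq = qf_facts[OF w1(1) u]
  have WV: "\<And>z. z \<in> SS t u \<Longrightarrow> Wd F z (Pf k u z * (of_real (g1 k t (Qr u z)) * aQ u z) + aPf k u z * of_real (gR k t (Qr u z)))
                (bVf k t u z)"
    by (rule W_V[OF u _ F])
  have dwF: "dw F w = Pf k u w * (of_real (g1 k t (Qr u w)) * aQ u w) + aPf k u w * of_real (gR k t (Qr u w))"
    by (rule W_dw[OF WV[OF w]])
  have dwbF: "dwbar F w = bVf k t u w" by (rule W_dwbar[OF WV[OF w]])
  obtain bb where WB: "Wd (bVf k t u) w
     (let P = Pf k u w; G = of_real (gR k t (Qr u w)); G1 = of_real (g1 k t (Qr u w)); G2 = of_real (g2 k t (Qr u w));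
          M = 1 - w * cnj w; D = 1 - u * cnj u; q = 1 - cnj w * u; qc = 1 - w * cnj u;
          aQ = q * (cnj w - cnj u) / (M^2 * D); bQ = qc * (w - u) / (M^2 * D);
          dbQ = (2 * q * qc - M * D) / (M^3 * D); aP = P * of_real k * cnj u / qc
      in P * (G1 * dbQ + G2 * aQ * bQ) + aP * (G1 * bQ) - of_real k * u * (P * (inverse q * (G1 * aQ)) + aP * (inverse q * G))) bb"
    using W_bV[OF u w] by blast
  have WB2: "Wd (dwbar F) w
     (let P = Pf k u w; G = of_real (gR k t (Qr u w)); G1 = of_real (g1 k t (Qr u w)); G2 = of_real (g2 k t (Qr u w));
          M = 1 - w * cnj w; D = 1 - u * cnj u; q = 1 - cnj w * u; qc = 1 - w * cnj u;
          aQ = q * (cnj w - cnj u) / (M^2 * D); bQ = qc * (w - u) / (M^2 * D);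
          dbQ = (2 * q * qc - M * D) / (M^3 * D); aP = P * of_real k * cnj u / qc
      in P * (G1 * dbQ + G2 * aQ * bQ) + aP * (G1 * bQ) - of_real k * u * (P * (inverse q * (G1 * aQ)) + aP * (inverse q * G))) bb"
    by (rule W_transform[OF WB SS_open[OF u] w]) (use W_dwbar[OF WV] in auto)
  note dwdwb = W_dw[OF WB2]
  have Fw: "F w = Pf k u w * of_real (gR k t (Qr u w))"
    using F[OF w] V_formula[OF w1(1) u w1(2)] by simp
  have c1: "complex_of_real ((1 - (cmod w)\<^sup>2)\<^sup>2) = (1 - w * cnj w)^2"
  proof -
    have "complex_of_real ((1 - (cmod w)\<^sup>2)\<^sup>2) = (1 - complex_of_real ((cmod w)\<^sup>2))\<^sup>2"
      by (simp only: of_real_power of_real_diff of_real_1)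
    then show ?thesis by (simp only: complex_norm_square)
  qed
  have c2: "complex_of_real (k * (1 - (cmod w)\<^sup>2)) = of_real k * (1 - w * cnj w)"
    by (simp add: complex_norm_square[symmetric] del: of_real_power)
  have c3: "complex_of_real (k\<^sup>2 * (cmod w)\<^sup>2) = (of_real k)^2 * (w * cnj w)"
    by (simp only: of_real_mult complex_norm_square[symmetric] of_real_power)
  have c4: "complex_of_real (k\<^sup>2 + 1/4) = (of_real k)^2 + 1/4" by simp
  have Q1: "Qr u w \<ge> 1" by (rule Qr_ge1[OF w1(1) u])
  have hQ: "of_real (Qr u w) * ((1 - w * cnj w) * (1 - u * cnj u)) = (1 - cnj w * u) * (1 - w * cnj u)"
  proof -
    have B: "(1 - w * cnj w) * (1 - u * cnj u) \<noteq> 0"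
      by (rule no_zero_divisors[OF one_minus_nz[OF w1(1)] one_minus_nz[OF u]])
    have "of_real (Qr u w) * ((1 - w * cnj w) * (1 - u * cnj u)) = (1 - w * cnj u) * (1 - cnj w * u)"
      using Qr_complex[OF w1(1) u] nonzero_eq_divide_eq[OF B] by metis
    then show ?thesis by (metis mult.commute)
  qed
  have nzQ: "complex_of_real (Qr u w) \<noteq> 0" using Q1 by auto
  note FA = final_alg[where M="1 - w * cnj w" and D="1 - u * cnj u" and q="1 - cnj w * u" and qc="1 - w * cnj u"
     and w=w and wc="cnj w" and u=u and uc="cnj u" and Q="of_real (Qr u w)" and k="of_real k"
     and P="Pf k u w" and G="of_real (gR k t (Qr u w))" and Ga="of_real (g1 k t (Qr u w))" and Gb="of_real (g2 k t (Qr u w))",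
     OF refl refl refl refl hQ one_minus_nz[OF w1(1)] one_minus_nz[OF u] qq(2)[unfolded qf_def] qq(3) nzQ]
  have "Dop k F w = Pf k u w * (of_real (Qr u w) * (of_real (Qr u w) - 1) * of_real (g2 k t (Qr u w))
      + (2 * of_real (Qr u w) - 1) * of_real (g1 k t (Qr u w)) + ((of_real k)^2 / of_real (Qr u w) + 1/4) * of_real (gR k t (Qr u w)))"
    unfolding Dop_def LD_def c1 c2 c3 c4 dwF dwbF dwdwb Fw Let_def aPf_def bVf_def aQ_def bQ_def qf_def
    by (rule FA)
  also have "\<dots> = Pf k u w * of_real (Qr u w * (Qr u w - 1) * g2 k t (Qr u w) + (2 * Qr u w - 1) * g1 k t (Qr u w)
      + (k^2 / Qr u w + 1/4) * gR k t (Qr u w))" by simp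
  also have "\<dots> = Pf k u w * of_real (gtt k t (Qr u w))"
    using radial[of "Qr u w" t k] Q1 w1(2) by simp
  finally show ?thesis .
qed


lemma dtt_main:
  assumes w: "cmod w < 1" and u: "cmod u < 1" and Qt: "Qr u w < (cosh (t/2))^2"
  shows "dtt (\<lambda>s. V_fun k s w u) t = Pf k u w * of_real (gtt k t (Qr u w))"
proof -
  define Q where "Q = Qr u w"
  have Q0: "0 < Q" using Qr_ge1[OF w u] unfolding Q_def by simp
  define T where "T = {s::real. Q < (cosh (s/2))^2}"
  have oT: "open T" unfolding T_def
    by (intro open_Collect_less continuous_intros) auto
  have tT: "t \<in> T" using Qt unfolding T_def Q_def by simp
  have eqV: "\<And>s. s \<in> T \<Longrightarrow> V_fun k s w u = Pf k u w * of_real (gR k s Q)"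
    unfolding T_def Q_def using V_formula[OF w u] by simp
  have d1: "\<And>s. s \<in> T \<Longrightarrow> ((\<lambda>s. V_fun k s w u) has_vector_derivative Pf k u w * of_real (gt k s Q)) (at s)"
  proof -
    fix s assume s: "s \<in> T"
    then have sQ: "Q < (cosh (s/2))^2" unfolding T_def by simp
    have "((\<lambda>s. Pf k u w * of_real (gR k s Q)) has_vector_derivative Pf k u w * of_real (gt k s Q)) (at s)"
      by (rule has_vector_derivative_mult_right[OF has_vector_derivative_of_real[OF gR_dt[OF Q0 sQ]]])
    then show "((\<lambda>s. V_fun k s w u) has_vector_derivative Pf k u w * of_real (gt k s Q)) (at s)"
      by (rule has_vector_derivative_transform_within_open[OF _ oT s]) (simp add: eqV)
  qed
  have vd: "\<And>s. s \<in> T \<Longrightarrow> vector_derivative (\<lambda>s. V_fun k s w u) (at s) = Pf k u w * of_real (gt k s Q)"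
    using d1 vector_derivative_at by blast
  have "((\<lambda>s. Pf k u w * of_real (gt k s Q)) has_vector_derivative Pf k u w * of_real (gtt k t Q)) (at t)"
    by (rule has_vector_derivative_mult_right[OF has_vector_derivative_of_real[OF gt_dt[OF Q0 Qt[folded Q_def]]]])
  then have "((\<lambda>s. vector_derivative (\<lambda>s. V_fun k s w u) (at s)) has_vector_derivative Pf k u w * of_real (gtt k t Q)) (at t)"
    by (rule has_vector_derivative_transform_within_open[OF _ oT tT]) (simp add: vd)
  then show ?thesis unfolding dtt_def Q_def by (rule vector_derivative_at)
qed

lemma hdist_sym: "hdist w z = hdist z w"
proof -
  have "cmod (1 - w * cnj z) = cmod (1 - z * cnj w)"
    by (metis complex_cnj_cnj complex_cnj_diff complex_cnj_mult complex_cnj_one complex_mod_cnj mult.commute)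
  then show ?thesis unfolding hdist_def by (simp add: mult.commute)
qed

lemma Qr_sym: "Qr u w = Qr w u"
proof -
  have "cmod (1 - w * cnj u) = cmod (1 - u * cnj w)"
    by (metis complex_cnj_cnj complex_cnj_diff complex_cnj_mult complex_cnj_one complex_mod_cnj mult.commute)
  then show ?thesis unfolding Qr_def by (simp add: mult.commute)
qed

lemma phase_sym: assumes "cmod w < 1" "cmod z < 1" shows "phase k w z = phase (- k) z w"
proof -
  define x where "x = 1 - cnj w * z"
  have re: "Re x > 0" using qf_Re[OF assms(1) assms(2)] unfolding x_def qf_def .
  have cx: "1 - cnj z * w = cnj x" unfolding x_def by (simp add: mult.commute)
  have "Arg (cnj x) = - Arg x"
  proof (cases "x \<in> \<real>")
    case True
    then obtain r where r: "x = of_real r" by (auto elim: Reals_cases)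
    then have "r > 0" using re by simp
    then show ?thesis using True r by (simp add: Arg_cnj)
  next
    case False then show ?thesis by (simp add: Arg_cnj)
  qed
  then show ?thesis unfolding phase_def x_def[symmetric] cx by simp
qed

lemma V_sym: assumes "cmod w < 1" "cmod z < 1" shows "V_fun k s w z = V_fun (- k) s z w"
  unfolding V_part1[OF assms] V_part1[OF assms(2,1)] phase_sym[OF assms] hdist_sym[of w z]
  by (simp add: v_fun_def)

lemma Q_lt: assumes "cmod w < 1" "cmod u < 1" "hdist w u < t" shows "Qr u w < (cosh (t/2))^2"
proof -
  have Q1: "sqrt (Qr u w) \<ge> 1" using Qr_ge1[OF assms(1,2)] by simp
  have "arcosh (sqrt (Qr u w)) < t/2" using assms(3) unfolding hdist_Qr by simp
  moreover have "arcosh (sqrt (Qr u w)) \<ge> 0" using Q1 by (simp add: arcosh_nonneg_real)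
  ultimately have "cosh (arcosh (sqrt (Qr u w))) < cosh (t/2)" by (intro cosh_real_strict_mono)
  then have "sqrt (Qr u w) < cosh (t/2)" using Q1 by simp
  then have "(sqrt (Qr u w))^2 < (cosh (t/2))^2" using Q1 by (intro power_strict_mono) auto
  then show ?thesis using Q1 by simp
qed

theorem theorem2:
  fixes k t :: real and w w' :: complex
  assumes "cmod w < 1" and "cmod w' < 1"
  shows "V_fun k t w w' =
           phase k w w' * complex_of_real (1 / (2 * pi) *
             pos_pow_neg_half ((cosh (t/2))\<^sup>2 - (cosh (hdist w w' / 2))\<^sup>2)) *
           hyp2F1 \<bar>k\<bar> (- \<bar>k\<bar>) (1/2)
             (complex_of_real (1 - (cosh (t/2))\<^sup>2 / (cosh (hdist w w' / 2))\<^sup>2))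
         \<and> (t > 0 \<and> hdist w w' < t \<longrightarrow>
           Dop k (\<lambda>z. V_fun k t z w') w = dtt (\<lambda>s. V_fun k s w w') t
         \<and> Dop (- k) (\<lambda>z. V_fun k t w z) w' = dtt (\<lambda>s. V_fun k s w w') t)"
proof (intro conjI impI)
  show "V_fun k t w w' =
           phase k w w' * complex_of_real (1 / (2 * pi) *
             pos_pow_neg_half ((cosh (t/2))\<^sup>2 - (cosh (hdist w w' / 2))\<^sup>2)) *
           hyp2F1 \<bar>k\<bar> (- \<bar>k\<bar>) (1/2)
             (complex_of_real (1 - (cosh (t/2))\<^sup>2 / (cosh (hdist w w' / 2))\<^sup>2))"
    unfolding V_part1[OF assms] v_fun_def by (simp add: mult.assoc)
next
  assume h: "t > 0 \<and> hdist w w' < t"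
  have Q: "Qr w' w < (cosh (t/2))^2" by (rule Q_lt[OF assms]) (use h in simp)
  have wS: "w \<in> SS t w'" using Q assms SS_mem by simp
  have "Dop k (\<lambda>z. V_fun k t z w') w = Pf k w' w * of_real (gtt k t (Qr w' w))"
    by (rule Dop_main[OF assms(2) wS]) simp
  also have "\<dots> = dtt (\<lambda>s. V_fun k s w w') t"
    by (rule dtt_main[OF assms Q, symmetric])
  finally show "Dop k (\<lambda>z. V_fun k t z w') w = dtt (\<lambda>s. V_fun k s w w') t" .
next
  assume h: "t > 0 \<and> hdist w w' < t"
  have Q: "Qr w w' < (cosh (t/2))^2" using Q_lt[OF assms] h Qr_sym by simp
  have wS: "w' \<in> SS t w" using Q assms SS_mem by simp
  have "Dop (- k) (\<lambda>z. V_fun k t w z) w' = Pf (- k) w w' * of_real (gtt (- k) t (Qr w w'))"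
  proof (rule Dop_main[OF assms(1) wS])
    fix y assume "y \<in> SS t w"
    then have "cmod y < 1" using SS_mem by simp
    then show "V_fun k t w y = V_fun (- k) t y w" using V_sym[OF assms(1)] by simp
  qed
  also have "\<dots> = dtt (\<lambda>s. V_fun (- k) s w' w) t"
    by (rule dtt_main[OF assms(2,1) Q, symmetric])
  also have "(\<lambda>s. V_fun (- k) s w' w) = (\<lambda>s. V_fun k s w w')"
    using V_sym[OF assms] by simp
  finally show "Dop (- k) (\<lambda>z. V_fun k t w z) w' = dtt (\<lambda>s. V_fun k s w w') t" .
qed

end
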